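(* Under the setting described in the context, the family of functions $G(\Theta_T)=\{G(\theta):\theta\in\Theta_T\}$ on $\Delta_T$ is equicontinuous.
   Context: Fix $T>0$. Let $W\subset C^1([0,1]\times[0,T];[0,\infty))$ be a set of non-negative $C^1$ functions $w(y,t)$, with Borel $\sigma$-algebra from the supremum norm $\|w\|=\sup_{(y,t)\in[0,1]\times[0,T]}|w(y,t)|$. Let $\lambda$ be a Borel probability measure on $W$ with $M_W:=\int_W\|w\|\lambda(dw)<\infty$ and \[C'_W:=\sup_{w\in W}\sup_{(y,t),(y',t')\in[0,1]\times[0,T]}|w(y,t)-w(y',t')|<\infty.\] Let $\sigma\ge0$ be measurable on $W\times[0,1]$ with $\int_W\sigma(w,y)\lambda(dw)=1$ for all $y\in[0,1]$ and $\int_0^1\sigma(w,z)dz=1$ for all $w\in W$. Let $\Gamma_b=\{(0,s):0\le s\le T\}$, $\Gamma_i=\{(z,0):0\le z\le1\}$, $\Gamma=\Gamma_b\cup\Gamma_i$, $\Gamma_t=\Gamma_i\cup\{(0,s):0\le s\le t\}$, $\Delta_T=\{(\gamma,t)\in\Gamma\times[0,T]:\gamma\in\Gamma_t\}$ (a set homeomorphic to a planar trapezoid via its parametrization). Totally order $\Gamma$ by: for $s\le t$ and $z\le y$, $(0,T)\succeq(0,t)\succeq(0,s)\succeq(0,0)\succeq(z,0)\succeq(y,0)\succeq(1,0)$. The set $\Theta_T$ consists of all continuous $\theta:\Delta_T\to[0,1]$ with $\theta((y_0,t_0),t_0)=y_0$ for $(y_0,t_0)\in\Gamma$, such that for each $t$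 the map $\theta(\cdot,t):\Gamma_t\to[0,1]$ is surjective and non-increasing with respect to $\succeq$, and for each $\gamma$, $\theta(\gamma,t)$ is non-decreasing in $t$. For $\theta\in\Theta_T$, $w\in W$, $z\in[0,1)$ put $\Omega_{\theta,w,z}(0,t)=\int_0^tw(\theta((z,0),u),u)\,du$ and $\Omega_{\theta,w}(s,t)=\int_s^tw(\theta((0,s),u),u)\,du$ for $0<s\le t$. Define $G(\theta)$ on $\Delta_T$ by \[G(\theta)((y_0,0),t)=1-\int_{W\times[y_0,1)}e^{-\Omega_{\theta,w,z}(0,t)}\sigma(w,z)\,\lambda(dw)\,dz,\quad y_0\in[0,1],\] and, for $0\le t_0\le t\le T$, \[\begin{aligned}G(\theta)((0,t_0),t)=\;&1-\int_{W\times[0,1)}e^{-\Omega_{\theta,w,z}(0,t)}\sigma(w,z)\lambda(dw)dz\\&-\int_{W\times[0,1)}\sum_{k\ge1}\int_{0\le u_1\le\cdots\le u_k\le t_0}w(\theta((z,0),u_1),u_1)e^{-\Omega_{\theta,w,z}(0,u_1)}\\&\qquad\times\prod_{i=2}^k\Bigl(w(\theta((0,u_{i-1}),u_i),u_i)e^{-\Omega_{\theta,w}(u_{i-1},u_i)}\Bigr)e^{-\Omega_{\theta,w}(u_k,t)}\,du_1\cdots du_k\;\sigma(w,z)\lambda(dw)dz.\end{aligned}\] *)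

theory Defs
  imports "HOL-Analysis.Analysis" "HOL-Probability.Probability"
begin

definition rect :: "real \<Rightarrow> (real \<times> real) set" where
  "rect T = {0..1} \<times> {0..T}"

text \<open>Elements of W are identified with functions on the
  rectangle by requiring them to vanish outside of it.\<close>
definition C1_on :: "(real \<times> real) set \<Rightarrow> (real \<times> real \<Rightarrow> real) \<Rightarrow> bool" where
  "C1_on R w \<longleftrightarrow> (\<exists>D :: real \<times> real \<Rightarrow> ((real \<times> real) \<Rightarrow>\<^sub>L real).
      continuous_on R D \<and> (\<forall>p\<in>R. (w has_derivative blinfun_apply (D p)) (at p within R)))"

definition admissible_W :: "real \<Rightarrow> (real \<times> real \<Rightarrow> real) set \<Rightarrow> bool" where
  "admissible_W T W \<longleftrightarrow> (\<forall>w\<in>W. C1_on (rect T) w \<and> (\<forall>p\<in>rect T. 0 \<le> w p)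
      \<and> (\<forall>p. p \<notin> rect T \<longrightarrow> w p = 0))"

definition supnorm :: "real \<Rightarrow> (real \<times> real \<Rightarrow> real) \<Rightarrow> real" where
  "supnorm T w = (SUP p\<in>rect T. \<bar>w p\<bar>)"

definition supdist :: "real \<Rightarrow> (real \<times> real \<Rightarrow> real) \<Rightarrow> (real \<times> real \<Rightarrow> real) \<Rightarrow> real" where
  "supdist T v w = (SUP p\<in>rect T. \<bar>v p - w p\<bar>)"

definition sup_open :: "real \<Rightarrow> (real \<times> real \<Rightarrow> real) set \<Rightarrow> (real \<times> real \<Rightarrow> real) set \<Rightarrow> bool" where
  "sup_open T W U \<longleftrightarrow> U \<subseteq> W \<and>
     (\<forall>w\<in>U. \<exists>e>0. \<forall>v\<in>W. supdist T v w < e \<longrightarrow> v \<in> U)"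

definition sup_borel_sets :: "real \<Rightarrow> (real \<times> real \<Rightarrow> real) set \<Rightarrow> (real \<times> real \<Rightarrow> real) set set" where
  "sup_borel_sets T W = sigma_sets W {U. sup_open T W U}"

text \<open>Points of Gamma are pairs (y,s): (0,s) on Gamma_b and (z,0) on Gamma_i.\<close>
definition Gamma :: "real \<Rightarrow> (real \<times> real) set" where
  "Gamma T = {(0, s) | s. 0 \<le> s \<and> s \<le> T} \<union> {(z, 0) | z. 0 \<le> z \<and> z \<le> 1}"

definition Gamma_t :: "real \<Rightarrow> (real \<times> real) set" where
  "Gamma_t t = {(z, 0) | z. 0 \<le> z \<and> z \<le> 1} \<union> {(0, s) | s. 0 \<le> s \<and> s \<le> t}"

definition Delta :: "real \<Rightarrow> ((real \<times> real) \<times> real) set" where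
  "Delta T = {(\<gamma>, t). 0 \<le> t \<and> t \<le> T \<and> \<gamma> \<in> Gamma_t t}"

definition gge :: "real \<times> real \<Rightarrow> real \<times> real \<Rightarrow> bool" where
  "gge a b \<longleftrightarrow>
     (fst a = 0 \<and> fst b = 0 \<and> snd b \<le> snd a)
   \<or> (snd a = 0 \<and> snd b = 0 \<and> fst a \<le> fst b)
   \<or> (fst a = 0 \<and> snd b = 0)"

definition Theta :: "real \<Rightarrow> ((real \<times> real) \<Rightarrow> real \<Rightarrow> real) set" where
  "Theta T = {\<theta>.
      continuous_on (Delta T) (\<lambda>(\<gamma>, t). \<theta> \<gamma> t)
    \<and> (\<forall>(\<gamma>, t)\<in>Delta T. \<theta> \<gamma> t \<in> {0..1})
    \<and> (\<forall>y0 t0. (y0, t0) \<in> Gamma T \<longrightarrow> \<theta> (y0, t0) t0 = y0)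
    \<and> (\<forall>t\<in>{0..T}. (\<lambda>\<gamma>. \<theta> \<gamma> t) ` Gamma_t t = {0..1})
    \<and> (\<forall>t\<in>{0..T}. \<forall>a\<in>Gamma_t t. \<forall>b\<in>Gamma_t t. gge a b \<longrightarrow> \<theta> a t \<le> \<theta> b t)
    \<and> (\<forall>\<gamma> s t. (\<gamma>, s) \<in> Delta T \<longrightarrow> (\<gamma>, t) \<in> Delta T \<longrightarrow> s \<le> t \<longrightarrow> \<theta> \<gamma> s \<le> \<theta> \<gamma> t)}"

definition Omega_i :: "((real \<times> real) \<Rightarrow> real \<Rightarrow> real) \<Rightarrow> (real \<times> real \<Rightarrow> real) \<Rightarrow> real \<Rightarrow> real \<Rightarrow> real" where
  "Omega_i \<theta> w z t = integral {0..t} (\<lambda>u. w (\<theta> (z, 0) u, u))"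

definition Omega_b :: "((real \<times> real) \<Rightarrow> real \<Rightarrow> real) \<Rightarrow> (real \<times> real \<Rightarrow> real) \<Rightarrow> real \<Rightarrow> real \<Rightarrow> real" where
  "Omega_b \<theta> w s t = integral {s..t} (\<lambda>u. w (\<theta> (0, s) u, u))"

text \<open>Ordered ord_simplex {0 \<le> u_1 \<le> ... \<le> u_k \<le> t0}, with u_i written u (i-1).\<close>
definition ord_simplex :: "nat \<Rightarrow> real \<Rightarrow> (nat \<Rightarrow> real) set" where
  "ord_simplex k t0 = {u \<in> ({..<k} \<rightarrow>\<^sub>E UNIV).
      (\<forall>i<k. 0 \<le> u i \<and> u i \<le> t0) \<and> (\<forall>i. Suc i < k \<longrightarrow> u i \<le> u (Suc i))}"

definition jump_integrand ::
  "((real \<times> real) \<Rightarrow> real \<Rightarrow> real) \<Rightarrow> (real \<times> real \<Rightarrow> real) \<Rightarrow> real \<Rightarrow> real \<Rightarrow> nat \<Rightarrow> (nat \<Rightarrow> real) \<Rightarrow> real" where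
  "jump_integrand \<theta> w z t k u =
     w (\<theta> (z, 0) (u 0), u 0) * exp (- Omega_i \<theta> w z (u 0))
     * (\<Prod>i\<in>{1..<k}. w (\<theta> (0, u (i - 1)) (u i), u i) * exp (- Omega_b \<theta> w (u (i - 1)) (u i)))
     * exp (- Omega_b \<theta> w (u (k - 1)) t)"

definition G ::
  "(real \<times> real \<Rightarrow> real) measure \<Rightarrow> ((real \<times> real \<Rightarrow> real) \<Rightarrow> real \<Rightarrow> real)
   \<Rightarrow> ((real \<times> real) \<Rightarrow> real \<Rightarrow> real) \<Rightarrow> (real \<times> real) \<Rightarrow> real \<Rightarrow> real" where
  "G lam \<sigma> \<theta> \<gamma> t =
    (if snd \<gamma> = 0 then
       1 - (LINT p : space lam \<times> {fst \<gamma>..<1} | (lam \<Otimes>\<^sub>M lborel).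
              exp (- Omega_i \<theta> (fst p) (snd p) t) * \<sigma> (fst p) (snd p))
     else
       1 - (LINT p : space lam \<times> {0..<1} | (lam \<Otimes>\<^sub>M lborel).
              exp (- Omega_i \<theta> (fst p) (snd p) t) * \<sigma> (fst p) (snd p))
         - (LINT p : space lam \<times> {0..<1} | (lam \<Otimes>\<^sub>M lborel).
              (\<Sum>k. (LINT u : ord_simplex (Suc k) (snd \<gamma>) | PiM {..<Suc k} (\<lambda>_. lborel).
                       jump_integrand \<theta> (fst p) (snd p) t (Suc k) u))
              * \<sigma> (fst p) (snd p)))"

end

theory Submission
  imports Defs
begin

definition clamp :: "real \<Rightarrow> real \<Rightarrow> real \<Rightarrow> real" where
  "clamp a b x = max a (min b x)"

lemma clamp_in: "a \<le> b \<Longrightarrow> clamp a b x \<in> {a..b}" by (auto simp: clamp_def)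
lemma clamp_id: "x \<in> {a..b} \<Longrightarrow> clamp a b x = x" by (auto simp: clamp_def)
lemma clamp_id': "a \<le> x \<Longrightarrow> x \<le> b \<Longrightarrow> clamp a b x = x" by (auto simp: clamp_def)
lemma continuous_on_clamp[continuous_intros]:
  "continuous_on S f \<Longrightarrow> continuous_on S g \<Longrightarrow> continuous_on S h \<Longrightarrow> continuous_on S (\<lambda>x. clamp (g x) (h x) (f x))"
  unfolding clamp_def by (intro continuous_intros)

lemma W_cont: assumes "admissible_W T W" "w \<in> W" shows "continuous_on (rect T) w"
proof -
  from assms obtain D where "\<forall>p\<in>rect T. (w has_derivative blinfun_apply (D p)) (at p within rect T)"
    unfolding admissible_W_def C1_on_def by blast
  then show ?thesis unfolding continuous_on_eq_continuous_within
    using has_derivative_continuous by blast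
qed

lemma W_nonneg: "admissible_W T W \<Longrightarrow> w \<in> W \<Longrightarrow> p \<in> rect T \<Longrightarrow> 0 \<le> w p"
  unfolding admissible_W_def by blast

lemma compact_rect: "compact (rect T)" unfolding rect_def by (simp add: compact_Times)

lemma rect_iff: "(a, b) \<in> rect T \<longleftrightarrow> 0 \<le> a \<and> a \<le> 1 \<and> 0 \<le> b \<and> b \<le> T"
  unfolding rect_def by auto

lemma bdd_cont_rect: fixes f :: "real\<times>real \<Rightarrow> real" assumes "continuous_on (rect T) f" shows "bdd_above ((\<lambda>p. \<bar>f p\<bar>) ` rect T)"
proof -
  have "continuous_on (rect T) (\<lambda>p. \<bar>f p\<bar>)" by (intro continuous_intros assms)
  then have "compact ((\<lambda>p. \<bar>f p\<bar>) ` rect T)" by (intro compact_continuous_image compact_rect)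
  then show ?thesis by (intro bounded_imp_bdd_above compact_imp_bounded)
qed

lemma W_le_supnorm: assumes "admissible_W T W" "w \<in> W" "p \<in> rect T"
  shows "\<bar>w p\<bar> \<le> supnorm T w"
  unfolding supnorm_def by (rule cSUP_upper[OF assms(3) bdd_cont_rect[OF W_cont[OF assms(1,2)]]])

lemma W_le_supnorm': assumes "admissible_W T W" "w \<in> W" "p \<in> rect T"
  shows "w p \<le> supnorm T w"
  using W_le_supnorm[OF assms] by simp

lemma supnorm_nonneg: assumes "admissible_W T W" "w \<in> W" "T \<ge> 0" shows "0 \<le> supnorm T w"
proof -
  have "(0,0) \<in> rect T" using assms by (simp add: rect_iff)
  then show ?thesis using W_le_supnorm[OF assms(1,2)] by (meson abs_ge_zero order_trans)
qed

lemma supdist_le: assumes "admissible_W T W" "v \<in> W" "w \<in> W" "p \<in> rect T"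
  shows "\<bar>v p - w p\<bar> \<le> supdist T v w"
proof -
  have "continuous_on (rect T) (\<lambda>p. v p - w p)"
    by (intro continuous_intros W_cont[OF assms(1,2)] W_cont[OF assms(1,3)])
  from bdd_cont_rect[OF this] show ?thesis unfolding supdist_def
    by (rule cSUP_upper[OF assms(4)])
qed

definition sfilter :: "real \<Rightarrow> (real\<times>real\<Rightarrow>real) set \<Rightarrow> (real\<times>real\<Rightarrow>real) \<Rightarrow> (real\<times>real\<Rightarrow>real) filter" where
  "sfilter T W w = (INF e\<in>{0<..}. principal {v\<in>W. supdist T v w < e})"

lemma eventually_sfilter:
  "eventually P (sfilter T W w) \<longleftrightarrow> (\<exists>e>0. \<forall>v\<in>W. supdist T v w < e \<longrightarrow> P v)"
  unfolding sfilter_def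
  apply (subst eventually_INF_base)
    apply (auto simp: eventually_principal)
  subgoal for a b by (rule bexI[of _ "min a b"]) auto
  done

lemma sfilter_measurable:
  fixes f :: "(real\<times>real\<Rightarrow>real) \<Rightarrow> real"
  assumes "sets M = sup_borel_sets T W" "space M = W"
    and "\<And>w. w \<in> W \<Longrightarrow> (f \<longlongrightarrow> f w) (sfilter T W w)"
  shows "f \<in> borel_measurable M"
  unfolding borel_measurable_iff_greater
proof
  fix a
  have "sup_open T W {w \<in> W. a < f w}"
    unfolding sup_open_def
  proof safe
    fix w assume "w \<in> W" "a < f w"
    then have "eventually (\<lambda>v. a < f v) (sfilter T W w)"
      using assms(3) order_tendstoD(1) by blast
    then show "\<exists>e>0. \<forall>v\<in>W. supdist T v w < e \<longrightarrow> v \<in> {w \<in> W. a < f w}"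
      unfolding eventually_sfilter by auto
  qed
  then show "{w \<in> space M. a < f w} \<in> sets M"
    unfolding assms(1,2) sup_borel_sets_def by (auto intro: sigma_sets.Basic)
qed

lemma sfilter_eval:
  assumes "admissible_W T W" "w \<in> W" "p \<in> rect T"
  shows "((\<lambda>v. v p) \<longlongrightarrow> w p) (sfilter T W w)"
proof (rule tendstoI)
  fix e :: real assume "e > 0"
  show "eventually (\<lambda>v. dist (v p) (w p) < e) (sfilter T W w)"
    unfolding eventually_sfilter
    using supdist_le[OF assms(1) _ assms(2,3)] \<open>e>0\<close> by (force simp: dist_real_def)
qed

lemma sfilter_integral:
  fixes a b :: real
  assumes adm: "admissible_W T W" and w: "w \<in> W" and g: "\<And>u. u \<in> {a..b} \<Longrightarrow> g u \<in> rect T"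
    and gc: "continuous_on {a..b} g"
  shows "((\<lambda>v. integral {a..b} (\<lambda>u. v (g u))) \<longlongrightarrow> integral {a..b} (\<lambda>u. w (g u))) (sfilter T W w)"
proof (cases "a \<le> b")
  case False then have "{a..b} = {}" by auto then show ?thesis by simp
next
  case True
  show ?thesis
  proof (rule tendstoI)
    fix e :: real assume "e > 0"
    define d where "d = e / (b - a + 1)"
    have d: "d > 0" using \<open>e>0\<close> True by (simp add: d_def)
    have cw: "continuous_on {a..b} (\<lambda>u. v (g u))" if "v \<in> W" for v
      using continuous_on_compose2[OF W_cont[OF adm that] gc] g by (metis image_subsetI)
    show "eventually (\<lambda>v. dist (integral {a..b} (\<lambda>u. v (g u))) (integral {a..b} (\<lambda>u. w (g u))) < e) (sfilter T W w)"
      unfolding eventually_sfilter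
    proof (intro exI[of _ d] conjI d ballI impI)
      fix v assume v: "v \<in> W" and sd: "supdist T v w < d"
      have "dist (integral {a..b} (\<lambda>u. v (g u))) (integral {a..b} (\<lambda>u. w (g u)))
          = norm (integral {a..b} (\<lambda>u. v (g u) - w (g u)))"
        by (simp add: dist_norm integral_diff integrable_continuous_real cw v w)
      also have "\<dots> \<le> d * (b - a)"
        apply (rule integral_bound[OF True])
        using cw[OF v] cw[OF w] apply (intro continuous_intros; simp)
        using supdist_le[OF adm v w g] sd by fastforce
      also have "\<dots> < e" using d True \<open>e>0\<close> by (simp add: d_def field_simps)
      finally show "dist (integral {a..b} (\<lambda>u. v (g u))) (integral {a..b} (\<lambda>u. w (g u))) < e" .
    qed
  qed
qed


lemma cont2:
  fixes h :: "'a::topological_space \<Rightarrow> 'b::topological_space \<Rightarrow> 'c::topological_space"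
  assumes "continuous_on S (\<lambda>(a,b). h a b)" "continuous_on U f" "continuous_on U g" "\<And>x. x\<in>U \<Longrightarrow> (f x, g x) \<in> S"
  shows "continuous_on U (\<lambda>x. h (f x) (g x))"
  using continuous_on_compose2[OF assms(1) continuous_on_Pair[OF assms(2,3)]] assms(4) by auto

lemma GL1:
  fixes h :: "real \<Rightarrow> real \<Rightarrow> real" and T :: real
  assumes hc: "continuous_on (K \<times> {0..T}) (\<lambda>(p,v). h p v)" and T: "0 \<le> T"
  shows "continuous_on (K \<times> {0..T}) (\<lambda>(p,y). integral {0..y} (h p))"
proof -
  have eq: "integral {0..y} (h p) = integral {0..T} (\<lambda>v. h p (min v y)) - (T - y) * h p y"
    if p: "p \<in> K" and y: "0 \<le> y" "y \<le> T" for p y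
  proof -
    have c: "continuous_on {0..T} (\<lambda>v. h p (min v y))"
      using p y by (intro cont2[OF hc] continuous_intros) auto
    have "integral {0..T} (\<lambda>v. h p (min v y)) = integral {0..y} (\<lambda>v. h p (min v y)) + integral {y..T} (\<lambda>v. h p (min v y))"
      using Henstock_Kurzweil_Integration.integral_combine[where a=0 and c=y and b=T and f="\<lambda>v. h p (min v y)"] y integrable_continuous_real[OF c] by simp
    also have "integral {0..y} (\<lambda>v. h p (min v y)) = integral {0..y} (h p)"
      by (rule integral_cong) auto
    also have "integral {y..T} (\<lambda>v. h p (min v y)) = integral {y..T} (\<lambda>v. h p y)"
      by (rule integral_cong) auto
    also have "\<dots> = (T - y) * h p y" using y by simp
    finally show ?thesis by simp
  qed
  have c1: "continuous_on ((K \<times> {0..T}) \<times> cbox 0 T) (\<lambda>(x, v). h (fst x) (min v (snd x)))"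
    unfolding split_beta' by (intro cont2[OF hc] continuous_intros) auto
  have c2: "continuous_on (K \<times> {0..T}) (\<lambda>x. integral {0..T} (\<lambda>v. h (fst x) (min v (snd x))))"
    using integral_continuous_on_param[OF c1] by simp
  have c3: "continuous_on (K \<times> {0..T}) (\<lambda>x. integral {0..T} (\<lambda>v. h (fst x) (min v (snd x))) - (T - snd x) * h (fst x) (snd x))"
    using hc by (intro continuous_intros c2) (auto simp: split_beta')
  show ?thesis
    by (rule continuous_on_eq[OF c3]) (auto simp: eq)
qed

definition Tri :: "real \<Rightarrow> (real \<times> real) set" where
  "Tri T = {(s, y). 0 \<le> s \<and> s \<le> y \<and> y \<le> T}"

lemma GL2:
  fixes h :: "real \<Rightarrow> real \<Rightarrow> real" and T :: real
  assumes hc: "continuous_on (Tri T) (\<lambda>(s,v). h s v)" and T: "0 \<le> T"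
  shows "continuous_on (Tri T) (\<lambda>(s,y). integral {s..y} (h s))"
proof -
  define h' where "h' s v = h s (max s v)" for s v
  have hc': "continuous_on ({0..T} \<times> {0..T}) (\<lambda>(s,v). h' s v)"
    unfolding h'_def split_beta'
    by (intro cont2[OF hc] continuous_intros) (auto simp: Tri_def)
  note F = GL1[OF hc' T]
  have sub: "Tri T \<subseteq> {0..T}\<times>{0..T}" by (auto simp: Tri_def)
  have Fc: "continuous_on (Tri T) (\<lambda>x. integral {0..snd x} (h' (fst x)) - integral {0..fst x} (h' (fst x)))"
  proof (intro continuous_intros)
    show "continuous_on (Tri T) (\<lambda>x. integral {0..snd x} (h' (fst x)))"
      using continuous_on_subset[OF F sub] by (simp add: split_beta')
    show "continuous_on (Tri T) (\<lambda>x. integral {0..fst x} (h' (fst x)))"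
      by (intro cont2[OF F] continuous_intros) (auto simp: Tri_def)
  qed
  have eq: "integral {s..y} (h s) = integral {0..y} (h' s) - integral {0..s} (h' s)"
    if "(s, y) \<in> Tri T" for s y
  proof -
    have s: "0 \<le> s" "s \<le> y" "y \<le> T" using that by (auto simp: Tri_def)
    have ci: "continuous_on {0..y} (h' s)"
      using s by (intro cont2[OF hc'] continuous_intros) auto
    have "integral {0..y} (h' s) = integral {0..s} (h' s) + integral {s..y} (h' s)"
      using Henstock_Kurzweil_Integration.integral_combine[where a=0 and c=s and b=y and f="h' s"] s integrable_continuous_real[OF ci] by simp
    moreover have "integral {s..y} (h' s) = integral {s..y} (h s)"
      by (rule integral_cong) (auto simp: h'_def max_def)
    ultimately show ?thesis by simp
  qed
  show ?thesis
    by (rule continuous_on_eq[OF Fc]) (auto simp: eq)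
qed

lemma floor_approx: "(\<lambda>n. real_of_int \<lfloor>2^n * a\<rfloor> / 2^n) \<longlonglongrightarrow> (a::real)"
proof (rule tendsto_sandwich[of "\<lambda>n. a - (1/2)^n" _ _ "\<lambda>n. a"])
  show "\<forall>\<^sub>F n in sequentially. a - (1 / 2) ^ n \<le> real_of_int \<lfloor>2 ^ n * a\<rfloor> / 2 ^ n"
  proof (intro always_eventually allI)
    fix n :: nat
    have "2^n * a - 1 \<le> real_of_int \<lfloor>2 ^ n * a\<rfloor>" by linarith
    then have "(2^n * a - 1) / 2^n \<le> real_of_int \<lfloor>2 ^ n * a\<rfloor> / 2^n"
      by (intro divide_right_mono) auto
    then show "a - (1 / 2) ^ n \<le> real_of_int \<lfloor>2 ^ n * a\<rfloor> / 2 ^ n"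
      by (simp add: field_simps power_divide)
  qed
  show "\<forall>\<^sub>F n in sequentially. real_of_int \<lfloor>2 ^ n * a\<rfloor> / 2 ^ n \<le> a"
  proof (intro always_eventually allI)
    fix n :: nat
    have "real_of_int \<lfloor>2 ^ n * a\<rfloor> \<le> 2^n * a" by linarith
    then show "real_of_int \<lfloor>2 ^ n * a\<rfloor> / 2 ^ n \<le> a" by (simp add: field_simps)
  qed
  have "(\<lambda>n. a - (1/2::real)^n) \<longlonglongrightarrow> a - 0"
    by (intro tendsto_intros LIMSEQ_power_zero) auto
  then show "(\<lambda>n. a - (1/2::real)^n) \<longlonglongrightarrow> a" by simp
qed simp

lemma carath:
  fixes f :: "'a \<Rightarrow> real \<times> real \<Rightarrow> real"
  assumes fm: "\<And>x. (\<lambda>w. f w x) \<in> borel_measurable M"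
    and fc: "\<And>w. w \<in> space M \<Longrightarrow> continuous_on UNIV (f w)"
  shows "(\<lambda>p. f (fst p) (snd p)) \<in> borel_measurable (M \<Otimes>\<^sub>M (lborel \<Otimes>\<^sub>M lborel))"
proof (rule borel_measurable_LIMSEQ_real)
  define q :: "nat \<Rightarrow> real \<times> real \<Rightarrow> int \<times> int" where
    "q n x = (\<lfloor>2^n * fst x\<rfloor>, \<lfloor>2^n * snd x\<rfloor>)" for n x
  define r :: "nat \<Rightarrow> int \<times> int \<Rightarrow> real \<times> real" where
    "r n ij = (real_of_int (fst ij) / 2^n, real_of_int (snd ij) / 2^n)" for n ij
  show "(\<lambda>n. f (fst p) (r n (q n (snd p)))) \<longlonglongrightarrow> f (fst p) (snd p)" if "p \<in> space (M \<Otimes>\<^sub>M (lborel \<Otimes>\<^sub>M lborel))" for p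
  proof -
    have w: "fst p \<in> space M" using that by (auto simp: space_pair_measure)
    have "(\<lambda>n. r n (q n (snd p))) \<longlonglongrightarrow> (fst (snd p), snd (snd p))"
      unfolding r_def q_def fst_conv snd_conv by (intro tendsto_Pair floor_approx)
    then have "(\<lambda>n. r n (q n (snd p))) \<longlonglongrightarrow> snd p" by simp
    moreover have "isCont (f (fst p)) (snd p)"
      using fc[OF w] continuous_on_eq_continuous_at open_UNIV by blast
    ultimately show ?thesis using isCont_tendsto_compose by blast
  qed
  show "(\<lambda>p. f (fst p) (r n (q n (snd p)))) \<in> borel_measurable (M \<Otimes>\<^sub>M (lborel \<Otimes>\<^sub>M lborel))" for n
  proof (rule measurable_compose_countable[where f="\<lambda>ij p. f (fst p) (r n ij)" and g="\<lambda>p. q n (snd p)"])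
    show "(\<lambda>p. f (fst p) (r n ij)) \<in> borel_measurable (M \<Otimes>\<^sub>M (lborel \<Otimes>\<^sub>M lborel))" for ij
      by (rule measurable_compose[OF measurable_fst fm])
    show "(\<lambda>p. q n (snd p)) \<in> M \<Otimes>\<^sub>M (lborel \<Otimes>\<^sub>M lborel) \<rightarrow>\<^sub>M count_space UNIV"
      unfolding measurable_count_space_eq2_countable
    proof safe
      fix i j :: int
      have "(\<lambda>p. q n (snd p)) -` {(i, j)} \<inter> space (M \<Otimes>\<^sub>M (lborel \<Otimes>\<^sub>M lborel)) =
        {p \<in> space (M \<Otimes>\<^sub>M (lborel \<Otimes>\<^sub>M lborel)). \<lfloor>2^n * fst (snd p)\<rfloor> = i \<and> \<lfloor>2^n * snd (snd p)\<rfloor> = j}"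
        by (auto simp: q_def)
      also have "\<dots> \<in> sets (M \<Otimes>\<^sub>M (lborel \<Otimes>\<^sub>M lborel))" by measurable
      finally show "(\<lambda>p. q n (snd p)) -` {(i, j)} \<inter> space (M \<Otimes>\<^sub>M (lborel \<Otimes>\<^sub>M lborel)) \<in> sets (M \<Otimes>\<^sub>M (lborel \<Otimes>\<^sub>M lborel))" .
    qed simp
  qed
qed


lemma cont1:
  assumes "continuous_on S h" "continuous_on U f" "\<And>x. x\<in>U \<Longrightarrow> f x \<in> S"
  shows "continuous_on U (\<lambda>x. h (f x))"
  using continuous_on_compose2[OF assms(1,2)] assms(3) by auto

definition rhoi where "rhoi \<theta> w z v = w (\<theta> (z,0) v, v)"
definition Ai where "Ai \<theta> w z v = rhoi \<theta> w z v * exp (- Omega_i \<theta> w z v)"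
definition rhob where "rhob \<theta> w s v = w (\<theta> (0,s) v, v)"
definition Bf where "Bf \<theta> w s y = rhob \<theta> w s y * exp (- Omega_b \<theta> w s y)"
definition Cf where "Cf \<theta> w t s = exp (- Omega_b \<theta> w s t)"
definition Ei where "Ei \<theta> w t z = exp (- Omega_i \<theta> w z t)"

definition Ah where "Ah \<theta> w T z v = Ai \<theta> w (clamp 0 1 z) (clamp 0 T v)"
definition Bh where "Bh \<theta> w T s y = Bf \<theta> w (clamp 0 T s) (clamp (clamp 0 T s) T y)"
definition Ch where "Ch \<theta> w t s = Cf \<theta> w t (clamp 0 t s)"
definition Eh where "Eh \<theta> w t z = Ei \<theta> w t (clamp 0 1 z)"

lemma Omega_i_rhoi: "Omega_i \<theta> w z t = integral {0..t} (rhoi \<theta> w z)"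
  unfolding Omega_i_def rhoi_def by simp
lemma Omega_b_rhob: "Omega_b \<theta> w s t = integral {s..t} (rhob \<theta> w s)"
  unfolding Omega_b_def rhob_def by simp

locale S =
  fixes T :: real and W :: "(real\<times>real\<Rightarrow>real) set" and \<theta> :: "(real\<times>real) \<Rightarrow> real \<Rightarrow> real"
  assumes Tpos: "0 < T" and adm: "admissible_W T W" and th: "\<theta> \<in> Theta T"
begin

lemma th_cont: "continuous_on (Delta T) (\<lambda>(\<gamma>,t). \<theta> \<gamma> t)"
  using th unfolding Theta_def by blast

lemma th_range: "(\<gamma>,t) \<in> Delta T \<Longrightarrow> 0 \<le> \<theta> \<gamma> t \<and> \<theta> \<gamma> t \<le> 1"
  using th unfolding Theta_def by fastforce

lemma Delta_i: "0 \<le> z \<Longrightarrow> z \<le> 1 \<Longrightarrow> 0 \<le> v \<Longrightarrow> v \<le> T \<Longrightarrow> ((z,0),v) \<in> Delta T"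
  unfolding Delta_def Gamma_t_def by auto

lemma Delta_b: "0 \<le> s \<Longrightarrow> s \<le> v \<Longrightarrow> v \<le> T \<Longrightarrow> ((0,s),v) \<in> Delta T"
  unfolding Delta_def Gamma_t_def by auto

lemma rect_i: "0 \<le> z \<Longrightarrow> z \<le> 1 \<Longrightarrow> 0 \<le> v \<Longrightarrow> v \<le> T \<Longrightarrow> (\<theta> (z,0) v, v) \<in> rect T"
  using th_range[OF Delta_i] by (auto simp: rect_iff)

lemma rect_b: "0 \<le> s \<Longrightarrow> s \<le> v \<Longrightarrow> v \<le> T \<Longrightarrow> (\<theta> (0,s) v, v) \<in> rect T"
  using th_range[OF Delta_b] by (auto simp: rect_iff)

lemma cont_thi: "continuous_on ({0..1}\<times>{0..T}) (\<lambda>x. \<theta> (fst x, 0) (snd x))"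
  by (intro cont2[OF th_cont] continuous_intros) (auto intro: Delta_i)

lemma cont_thb: "continuous_on (Tri T) (\<lambda>x. \<theta> (0, fst x) (snd x))"
  by (intro cont2[OF th_cont] continuous_intros) (auto intro: Delta_b simp: Tri_def)

context fixes w assumes w: "w \<in> W"
begin

lemma cont_rhoi: "continuous_on ({0..1}\<times>{0..T}) (\<lambda>(z,v). rhoi \<theta> w z v)"
  unfolding rhoi_def split_beta'
  by (intro cont1[OF W_cont[OF adm w]] continuous_intros cont_thi) (auto intro: rect_i)

lemma cont_rhob: "continuous_on (Tri T) (\<lambda>(s,v). rhob \<theta> w s v)"
  unfolding rhob_def split_beta'
  by (intro cont1[OF W_cont[OF adm w]] continuous_intros cont_thb) (auto intro: rect_b simp: Tri_def)

lemma cont_Oi: "continuous_on ({0..1}\<times>{0..T}) (\<lambda>(z,v). Omega_i \<theta> w z v)"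
  unfolding Omega_i_rhoi using GL1[OF cont_rhoi] Tpos by simp

lemma cont_Ob: "continuous_on (Tri T) (\<lambda>(s,v). Omega_b \<theta> w s v)"
  unfolding Omega_b_rhob using GL2[OF cont_rhob] Tpos by simp

lemma cont_Ai: "continuous_on ({0..1}\<times>{0..T}) (\<lambda>(z,v). Ai \<theta> w z v)"
  unfolding Ai_def split_beta'
  using cont_rhoi cont_Oi unfolding split_beta' by (intro continuous_intros)

lemma cont_Bf: "continuous_on (Tri T) (\<lambda>(s,v). Bf \<theta> w s v)"
  unfolding Bf_def split_beta'
  using cont_rhob cont_Ob unfolding split_beta' by (intro continuous_intros)

lemma cont_Ah: "continuous_on UNIV (\<lambda>(z,v). Ah \<theta> w T z v)"
  unfolding Ah_def split_beta'
  using Tpos by (intro cont2[OF cont_Ai] continuous_intros) (auto simp: clamp_def)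

lemma cont_Bh: "continuous_on UNIV (\<lambda>(s,v). Bh \<theta> w T s v)"
  unfolding Bh_def split_beta'
  using Tpos by (intro cont2[OF cont_Bf] continuous_intros) (auto simp: clamp_def Tri_def)

lemma cont_Ch: assumes "0 \<le> t" "t \<le> T" shows "continuous_on UNIV (Ch \<theta> w t)"
proof -
  have "continuous_on UNIV (\<lambda>s. Omega_b \<theta> w (clamp 0 t s) t)"
    using assms by (intro cont2[OF cont_Ob] continuous_intros) (auto simp: clamp_def Tri_def)
  then show ?thesis unfolding Ch_def Cf_def by (intro continuous_intros)
qed

lemma cont_Eh: assumes "0 \<le> t" "t \<le> T" shows "continuous_on UNIV (Eh \<theta> w t)"
proof -
  have "continuous_on UNIV (\<lambda>z. Omega_i \<theta> w (clamp 0 1 z) t)"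
    using assms by (intro cont2[OF cont_Oi] continuous_intros) (auto simp: clamp_def)
  then show ?thesis unfolding Eh_def Ei_def by (intro continuous_intros)
qed

end

end


locale SM = S +
  fixes lam :: "(real\<times>real\<Rightarrow>real) measure"
  assumes lsets: "sets lam = sup_borel_sets T W" and lspace: "space lam = W"
begin

context fixes w assumes w: "w \<in> W"
begin

lemma tends_rhoi: "0 \<le> z \<Longrightarrow> z \<le> 1 \<Longrightarrow> 0 \<le> v \<Longrightarrow> v \<le> T \<Longrightarrow>
  ((\<lambda>w'. rhoi \<theta> w' z v) \<longlongrightarrow> rhoi \<theta> w z v) (sfilter T W w)"
  unfolding rhoi_def by (rule sfilter_eval[OF adm w rect_i])

lemma tends_rhob: "0 \<le> s \<Longrightarrow> s \<le> v \<Longrightarrow> v \<le> T \<Longrightarrow>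
  ((\<lambda>w'. rhob \<theta> w' s v) \<longlongrightarrow> rhob \<theta> w s v) (sfilter T W w)"
  unfolding rhob_def by (rule sfilter_eval[OF adm w rect_b])

lemma tends_Oi: assumes "0 \<le> z" "z \<le> 1" "0 \<le> t" "t \<le> T"
  shows "((\<lambda>w'. Omega_i \<theta> w' z t) \<longlongrightarrow> Omega_i \<theta> w z t) (sfilter T W w)"
  unfolding Omega_i_def
proof (rule sfilter_integral[OF adm w, where g="\<lambda>u. (\<theta> (z,0) u, u)"])
  show "u \<in> {0..t} \<Longrightarrow> (\<theta> (z, 0) u, u) \<in> rect T" for u using assms by (intro rect_i) auto
  show "continuous_on {0..t} (\<lambda>u. (\<theta> (z, 0) u, u))"
    using assms by (intro continuous_intros cont1[OF cont_thi, of _ "\<lambda>u. (z,u)", simplified]) auto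
qed

lemma tends_Ob: assumes "0 \<le> s" "s \<le> t" "t \<le> T"
  shows "((\<lambda>w'. Omega_b \<theta> w' s t) \<longlongrightarrow> Omega_b \<theta> w s t) (sfilter T W w)"
  unfolding Omega_b_def
proof (rule sfilter_integral[OF adm w, where g="\<lambda>u. (\<theta> (0,s) u, u)"])
  show "u \<in> {s..t} \<Longrightarrow> (\<theta> (0,s) u, u) \<in> rect T" for u using assms by (intro rect_b) auto
  show "continuous_on {s..t} (\<lambda>u. (\<theta> (0,s) u, u))"
    using assms by (intro continuous_intros cont1[OF cont_thb, of _ "\<lambda>u. (s,u)", simplified]) (auto simp: Tri_def)
qed

lemma tends_Ah: "((\<lambda>w'. Ah \<theta> w' T z v) \<longlongrightarrow> Ah \<theta> w T z v) (sfilter T W w)"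
  unfolding Ah_def Ai_def using Tpos
  by (intro tendsto_intros tends_rhoi tends_Oi) (auto simp: clamp_def)

lemma tends_Bh: "((\<lambda>w'. Bh \<theta> w' T s v) \<longlongrightarrow> Bh \<theta> w T s v) (sfilter T W w)"
  unfolding Bh_def Bf_def using Tpos
  by (intro tendsto_intros tends_rhob tends_Ob) (auto simp: clamp_def)

lemma tends_Ch: "0 \<le> t \<Longrightarrow> t \<le> T \<Longrightarrow> ((\<lambda>w'. Ch \<theta> w' t s) \<longlongrightarrow> Ch \<theta> w t s) (sfilter T W w)"
  unfolding Ch_def Cf_def
  by (intro tendsto_intros tends_Ob) (auto simp: clamp_def)

lemma tends_Eh: "0 \<le> t \<Longrightarrow> t \<le> T \<Longrightarrow> ((\<lambda>w'. Eh \<theta> w' t z) \<longlongrightarrow> Eh \<theta> w t z) (sfilter T W w)"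
  unfolding Eh_def Ei_def
  by (intro tendsto_intros tends_Oi) (auto simp: clamp_def)

end

lemma meas_Ah: "(\<lambda>p. Ah \<theta> (fst p) T (fst (snd p)) (snd (snd p))) \<in> borel_measurable (lam \<Otimes>\<^sub>M (lborel \<Otimes>\<^sub>M lborel))"
  using carath[where f="\<lambda>w x. Ah \<theta> w T (fst x) (snd x)" and M=lam]
    sfilter_measurable[OF lsets lspace tends_Ah] cont_Ah
  by (simp add: lspace split_beta')

lemma meas_Bh: "(\<lambda>p. Bh \<theta> (fst p) T (fst (snd p)) (snd (snd p))) \<in> borel_measurable (lam \<Otimes>\<^sub>M (lborel \<Otimes>\<^sub>M lborel))"
  using carath[where f="\<lambda>w x. Bh \<theta> w T (fst x) (snd x)" and M=lam]
    sfilter_measurable[OF lsets lspace tends_Bh] cont_Bh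
  by (simp add: lspace split_beta')

lemma meas_Ch: assumes "0 \<le> t" "t \<le> T"
  shows "(\<lambda>p. Ch \<theta> (fst p) t (fst (snd p :: real\<times>real))) \<in> borel_measurable (lam \<Otimes>\<^sub>M (lborel \<Otimes>\<^sub>M lborel))"
proof -
  have "continuous_on UNIV (\<lambda>x::real\<times>real. Ch \<theta> w t (fst x))" if "w \<in> W" for w
    by (intro cont1[OF cont_Ch[OF that assms]] continuous_intros) auto
  then show ?thesis
    using carath[where f="\<lambda>w x. Ch \<theta> w t (fst x)" and M=lam]
      sfilter_measurable[OF lsets lspace tends_Ch[OF _ assms]]
    by (simp add: lspace)
qed

lemma meas_Eh: assumes "0 \<le> t" "t \<le> T"
  shows "(\<lambda>p. Eh \<theta> (fst p) t (fst (snd p :: real\<times>real))) \<in> borel_measurable (lam \<Otimes>\<^sub>M (lborel \<Otimes>\<^sub>M lborel))"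
proof -
  have "continuous_on UNIV (\<lambda>x::real\<times>real. Eh \<theta> w t (fst x))" if "w \<in> W" for w
    by (intro cont1[OF cont_Eh[OF that assms]] continuous_intros) auto
  then show ?thesis
    using carath[where f="\<lambda>w x. Eh \<theta> w t (fst x)" and M=lam]
      sfilter_measurable[OF lsets lspace tends_Eh[OF _ assms]]
    by (simp add: lspace)
qed

end


definition Pn :: "(real\<Rightarrow>real) \<Rightarrow> (real\<Rightarrow>real\<Rightarrow>real) \<Rightarrow> nat \<Rightarrow> (nat\<Rightarrow>real) \<Rightarrow> real" where
  "Pn a b n u = a (u 0) * (\<Prod>i\<in>{1..<n}. b (u (i-1)) (u i))"

definition An :: "(real\<Rightarrow>real) \<Rightarrow> (real\<Rightarrow>real\<Rightarrow>real) \<Rightarrow> real \<Rightarrow> nat \<Rightarrow> (real\<Rightarrow>ennreal) \<Rightarrow> ennreal" where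
  "An a b t0 n g = (\<integral>\<^sup>+u. indicator (ord_simplex n t0) u * ennreal (Pn a b n u) * g (u (n-1)) \<partial>PiM {..<n} (\<lambda>_. lborel))"

definition Top :: "(real\<Rightarrow>real\<Rightarrow>real) \<Rightarrow> real \<Rightarrow> (real\<Rightarrow>ennreal) \<Rightarrow> real \<Rightarrow> ennreal" where
  "Top b t0 g s = (\<integral>\<^sup>+y. indicator {s..t0} y * ennreal (b s y) * g y \<partial>lborel)"

fun Hn :: "(real\<Rightarrow>real\<Rightarrow>real) \<Rightarrow> real \<Rightarrow> (real\<Rightarrow>ennreal) \<Rightarrow> nat \<Rightarrow> real \<Rightarrow> ennreal" where
  "Hn b t0 g 0 = (\<lambda>_. 0)"
| "Hn b t0 g (Suc N) = (\<lambda>s. g s + Top b t0 (Hn b t0 g N) s)"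

lemma ord_simplex_space: "ord_simplex n t0 \<subseteq> space (PiM {..<n} (\<lambda>_. lborel::real measure))"
  unfolding ord_simplex_def by (auto simp: space_PiM)

lemma comp_meas: assumes "i < n" shows "(\<lambda>u. u i) \<in> borel_measurable (PiM {..<n} (\<lambda>_. lborel::real measure))"
proof -
  from assms have "(\<lambda>u. u i) \<in> measurable (PiM {..<n} (\<lambda>_. lborel::real measure)) lborel"
    by (intro measurable_component_singleton) auto
  then show ?thesis by (simp add: measurable_cong_sets[OF refl sets_lborel])
qed

lemma ord_simplex_sets: "ord_simplex n t0 \<in> sets (PiM {..<n} (\<lambda>_. lborel::real measure))"
proof -
  let ?M = "PiM {..<n} (\<lambda>_. lborel::real measure)"
  have "ord_simplex n t0 = {u\<in>space ?M. (\<forall>i\<in>{..<n}. 0 \<le> u i \<and> u i \<le> t0)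
      \<and> (\<forall>i\<in>{i. Suc i < n}. u i \<le> u (Suc i))}"
    unfolding ord_simplex_def by (auto simp: space_PiM)
  also have "\<dots> \<in> sets ?M"
  proof (rule sets.sets_Collect_conj; rule sets.sets_Collect_finite_All)
    fix i assume i: "i \<in> {..<n}"
    have [measurable]: "(\<lambda>u. u i) \<in> borel_measurable ?M"
      using i by (intro comp_meas) auto
    show "{u\<in>space ?M. 0 \<le> u i \<and> u i \<le> t0} \<in> sets ?M" by measurable
  next
    fix i assume i: "i \<in> {i. Suc i < n}"
    have [measurable]: "(\<lambda>u. u i) \<in> borel_measurable ?M" "(\<lambda>u. u (Suc i)) \<in> borel_measurable ?M"
      using i by (intro comp_meas; auto)+
    show "{u\<in>space ?M. u i \<le> u (Suc i)} \<in> sets ?M" by measurable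
  qed (auto intro: finite_subset[of _ "{..<n}"])
  finally show ?thesis .
qed

lemma ord_simplex_mem:
  assumes "u \<in> ord_simplex n t0" "i < n"
  shows "0 \<le> u i" "u i \<le> t0"
  using assms unfolding ord_simplex_def by auto

lemma ord_simplex_mono:
  assumes "u \<in> ord_simplex n t0" "i \<le> j" "j < n"
  shows "u i \<le> u j"
  using assms(2,3)
proof (induction j)
  case 0 then show ?case by simp
next
  case (Suc j)
  show ?case
  proof (cases "i = Suc j")
    case False
    then have "u i \<le> u j" using Suc by auto
    also have "u j \<le> u (Suc j)" using assms(1) Suc.prems unfolding ord_simplex_def by auto
    finally show ?thesis .
  qed simp
qed

locale R =
  fixes a :: "real\<Rightarrow>real" and b :: "real\<Rightarrow>real\<Rightarrow>real" and t0 :: real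
  assumes a_nn: "\<And>v. 0 \<le> a v" and b_nn: "\<And>s y. 0 \<le> b s y"
    and am[measurable]: "a \<in> borel_measurable borel"
    and bm: "(\<lambda>p. b (fst p) (snd p)) \<in> borel_measurable (lborel \<Otimes>\<^sub>M lborel)"
begin

abbreviation "PM n \<equiv> PiM {..<n} (\<lambda>_::nat. lborel::real measure)"

lemma b_meas_comp:
  assumes "f \<in> borel_measurable M" "g \<in> borel_measurable M"
  shows "(\<lambda>x. b (f x) (g x)) \<in> borel_measurable M"
  using measurable_compose[OF measurable_Pair[of f M lborel g lborel] bm] assms by simp

lemma Pn_nn: "0 \<le> Pn a b n u"
  unfolding Pn_def using a_nn b_nn by (intro mult_nonneg_nonneg prod_nonneg) auto

lemma Pn_meas: assumes "n \<ge> 1" shows "Pn a b n \<in> borel_measurable (PM n)"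
proof -
  have c: "(\<lambda>u. u i) \<in> borel_measurable (PM n)" if "i < n" for i
    using that by (rule comp_meas)
  have "(\<lambda>u. a (u 0) * (\<Prod>i\<in>{1..<n}. b (u (i-1)) (u i))) \<in> borel_measurable (PM n)"
  proof (intro borel_measurable_times borel_measurable_prod)
    show "(\<lambda>u. a (u 0)) \<in> borel_measurable (PM n)"
      using measurable_compose[OF c am] assms by simp
    fix i assume "i \<in> {1..<n}"
    then show "(\<lambda>u. b (u (i-1)) (u i)) \<in> borel_measurable (PM n)"
      by (intro b_meas_comp c) auto
  qed
  then show ?thesis unfolding Pn_def[abs_def] .
qed

lemma An_integrand_meas:
  assumes "n \<ge> 1" "g \<in> borel_measurable borel"
  shows "(\<lambda>u. indicator (ord_simplex n t0) u * ennreal (Pn a b n u) * g (u (n-1))) \<in> borel_measurable (PM n)"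
proof -
  have c: "(\<lambda>u. u (n-1)) \<in> borel_measurable (PM n)"
    using assms by (intro comp_meas) auto
  show ?thesis
    using Pn_meas[OF assms(1)] ord_simplex_sets[of n t0] measurable_compose[OF c assms(2)]
    by measurable
qed

lemma Top_integrand_meas:
  assumes "g \<in> borel_measurable borel"
  shows "(\<lambda>(s, y). indicator {s..t0} y * ennreal (b s y) * g y) \<in> borel_measurable (borel \<Otimes>\<^sub>M lborel)"
proof -
  have bm': "(\<lambda>p. b (fst p) (snd p)) \<in> borel_measurable (borel \<Otimes>\<^sub>M lborel)"
    using bm by (subst (asm) measurable_cong_sets[OF sets_pair_measure_cong[OF sets_lborel refl] refl])
  have i: "(\<lambda>p::real\<times>real. indicator {fst p..t0} (snd p) :: ennreal) \<in> borel_measurable (borel \<Otimes>\<^sub>M lborel)"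
  proof -
    have "{p \<in> space (borel \<Otimes>\<^sub>M lborel). fst p \<le> snd p \<and> snd p \<le> t0} \<in> sets (borel \<Otimes>\<^sub>M (lborel::real measure))"
      by measurable
    then have "(\<lambda>p. indicator {p \<in> space (borel \<Otimes>\<^sub>M lborel). fst p \<le> snd p \<and> snd p \<le> t0} p :: ennreal)
        \<in> borel_measurable (borel \<Otimes>\<^sub>M (lborel::real measure))" by simp
    then show ?thesis
      by (rule measurable_cong[THEN iffD1, rotated]) (auto simp: indicator_def space_pair_measure)
  qed
  have "(\<lambda>p::real\<times>real. indicator {fst p..t0} (snd p) * ennreal (b (fst p) (snd p)) * g (snd p)) \<in> borel_measurable (borel \<Otimes>\<^sub>M lborel)"
    using i bm' assms by measurable
  then show ?thesis by (simp add: split_beta')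
qed

lemma Top_meas: "g \<in> borel_measurable borel \<Longrightarrow> Top b t0 g \<in> borel_measurable borel"
  unfolding Top_def[abs_def]
  by (rule lborel.borel_measurable_nn_integral[OF Top_integrand_meas])

lemma Hn_meas: "g \<in> borel_measurable borel \<Longrightarrow> Hn b t0 g N \<in> borel_measurable borel"
  by (induction N) (auto intro!: Top_meas borel_measurable_add)

lemma An_add:
  assumes "n \<ge> 1" "f \<in> borel_measurable borel" "h \<in> borel_measurable borel"
  shows "An a b t0 n (\<lambda>s. f s + h s) = An a b t0 n f + An a b t0 n h"
  unfolding An_def
  apply (subst nn_integral_add[symmetric])
    apply (rule An_integrand_meas[OF assms(1,2)])
   apply (rule An_integrand_meas[OF assms(1,3)])
  apply (auto intro!: nn_integral_cong simp: distrib_left)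
  done

lemma An_cmult:
  assumes "n \<ge> 1" "f \<in> borel_measurable borel"
  shows "An a b t0 n (\<lambda>s. c * f s) = c * An a b t0 n f"
  unfolding An_def
  apply (subst nn_integral_cmult[symmetric])
   apply (rule An_integrand_meas[OF assms(1,2)])
  apply (auto intro!: nn_integral_cong simp: ac_simps)
  done

lemma An_mono:
  assumes "n \<ge> 1" "\<And>s. 0 \<le> s \<Longrightarrow> s \<le> t0 \<Longrightarrow> f s \<le> h s"
  shows "An a b t0 n f \<le> An a b t0 n h"
  unfolding An_def
proof (rule nn_integral_mono)
  fix u
  show "indicator (ord_simplex n t0) u * ennreal (Pn a b n u) * f (u (n - 1))
     \<le> indicator (ord_simplex n t0) u * ennreal (Pn a b n u) * h (u (n - 1))"
  proof (cases "u \<in> ord_simplex n t0")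
    case True
    then have "f (u (n-1)) \<le> h (u (n-1))"
      using assms ord_simplex_mem[OF True, of "n-1"] by auto
    then show ?thesis by (intro mult_left_mono) auto
  qed simp
qed

lemma An_zero: "An a b t0 n (\<lambda>_. 0) = 0"
  unfolding An_def by simp

lemma An_one:
  assumes "g \<in> borel_measurable borel"
  shows "An a b t0 1 g = (\<integral>\<^sup>+v. indicator {0..t0} v * ennreal (a v) * g v \<partial>lborel)"
proof -
  interpret product_sigma_finite "\<lambda>_::nat. lborel::real measure" by standard
  let ?F = "\<lambda>v. indicator {0..t0} v * ennreal (a v) * g v"
  have eq: "indicator (ord_simplex 1 t0) u * ennreal (Pn a b 1 u) * g (u (1 - 1)) = ?F (u 0)"
    if "u \<in> space (PiM {..<1} (\<lambda>_::nat. lborel::real measure))" for u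
  proof -
    have "u \<in> ord_simplex 1 t0 \<longleftrightarrow> u 0 \<in> {0..t0}"
      using that unfolding ord_simplex_def by (auto simp: space_PiM)
    then show ?thesis by (simp add: Pn_def indicator_def)
  qed
  have "An a b t0 1 g = (\<integral>\<^sup>+u. ?F (u 0) \<partial>PiM {..<1::nat} (\<lambda>_. lborel))"
    unfolding An_def by (rule nn_integral_cong) (rule eq)
  also have "{..<1::nat} = {0}" by auto
  also have "(\<integral>\<^sup>+u. ?F (u 0) \<partial>PiM {0::nat} (\<lambda>_. lborel)) = (\<integral>\<^sup>+v. ?F v \<partial>lborel)"
    using assms by (intro product_nn_integral_singleton) simp
  finally show ?thesis .
qed

lemma An_Suc:
  assumes n: "n \<ge> 1" and gm: "g \<in> borel_measurable borel"
  shows "An a b t0 (Suc n) g = An a b t0 n (Top b t0 g)"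
proof -
  interpret product_sigma_finite "\<lambda>_::nat. lborel::real measure" by standard
  have ins: "{..<Suc n} = insert n {..<n}" by auto
  let ?f = "\<lambda>u. indicator (ord_simplex (Suc n) t0) u * ennreal (Pn a b (Suc n) u) * g (u (Suc n - 1))"
  have "An a b t0 (Suc n) g = (\<integral>\<^sup>+x. (\<integral>\<^sup>+y. ?f (x(n := y)) \<partial>lborel) \<partial>PM n)"
    unfolding An_def ins
    by (rule product_nn_integral_insert) (use An_integrand_meas[OF _ gm, of "Suc n"] ins in auto)
  also have "\<dots> = (\<integral>\<^sup>+x. indicator (ord_simplex n t0) x * ennreal (Pn a b n x) * Top b t0 g (x (n-1)) \<partial>PM n)"
  proof (rule nn_integral_cong)
    fix x assume x: "x \<in> space (PM n)"
    then have xe: "x \<in> {..<n} \<rightarrow>\<^sub>E UNIV" by (simp add: space_PiM)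
    have upd: "(x(n := y)) i = x i" if "i < n" for i y using that by simp
    have simp_iff: "x(n := y) \<in> ord_simplex (Suc n) t0 \<longleftrightarrow> x \<in> ord_simplex n t0 \<and> y \<in> {x (n-1)..t0}" for y
    proof
      assume A: "x(n := y) \<in> ord_simplex (Suc n) t0"
      have A1: "\<And>i. i < Suc n \<Longrightarrow> 0 \<le> (x(n := y)) i \<and> (x(n := y)) i \<le> t0"
        and A2: "\<And>i. Suc i < Suc n \<Longrightarrow> (x(n := y)) i \<le> (x(n := y)) (Suc i)"
        using A unfolding ord_simplex_def by blast+
      have "\<forall>i<n. 0 \<le> x i \<and> x i \<le> t0"
      proof safe
        fix i assume "i < n" then show "0 \<le> x i" "x i \<le> t0" using A1[of i] upd[of i] by auto
      qed
      moreover have "\<forall>i. Suc i < n \<longrightarrow> x i \<le> x (Suc i)"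
      proof safe
        fix i assume "Suc i < n" then show "x i \<le> x (Suc i)" using A2[of i] upd[of i] upd[of "Suc i"] by auto
      qed
      ultimately have "x \<in> ord_simplex n t0" using xe unfolding ord_simplex_def by blast
      moreover have "x (n-1) \<le> y"
        using A2[of "n-1"] upd[of "n-1"] n by simp
      moreover have "y \<le> t0" using A1[of n] by simp
      ultimately show "x \<in> ord_simplex n t0 \<and> y \<in> {x (n-1)..t0}" by auto
    next
      assume B: "x \<in> ord_simplex n t0 \<and> y \<in> {x (n-1)..t0}"
      then have x0: "0 \<le> x (n-1)" using ord_simplex_mem[of x n t0 "n-1"] n by auto
      have "x(n := y) \<in> {..<Suc n} \<rightarrow>\<^sub>E UNIV" using xe by (auto simp: PiE_def extensional_def)
      moreover have "\<forall>i<Suc n. 0 \<le> (x(n := y)) i \<and> (x(n := y)) i \<le> t0"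
        using B x0 unfolding ord_simplex_def by (auto simp: less_Suc_eq)
      moreover have "\<forall>i. Suc i < Suc n \<longrightarrow> (x(n := y)) i \<le> (x(n := y)) (Suc i)"
      proof (intro allI impI)
        fix i assume "Suc i < Suc n"
        then consider "Suc i < n" | "Suc i = n" by linarith
        then show "(x(n := y)) i \<le> (x(n := y)) (Suc i)"
        proof cases
          case 1 then show ?thesis using B unfolding ord_simplex_def by auto
        next
          case 2 then have "i = n - 1" by simp
          then show ?thesis using B 2 by auto
        qed
      qed
      ultimately show "x(n := y) \<in> ord_simplex (Suc n) t0" unfolding ord_simplex_def by blast
    qed
    have Pn_upd: "Pn a b (Suc n) (x(n := y)) = Pn a b n x * b (x (n-1)) y" for y
    proof -
      have p0: "(\<Prod>i\<in>{1..<Suc n}. b ((x(n := y)) (i-1)) ((x(n := y)) i))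
          = (\<Prod>i\<in>{1..<n}. b ((x(n := y)) (i-1)) ((x(n := y)) i)) * b ((x(n := y)) (n-1)) ((x(n := y)) n)"
        by (rule prod.atLeastLessThan_Suc[OF n])
      have p1: "(\<Prod>i\<in>{1..<n}. b ((x(n := y)) (i-1)) ((x(n := y)) i)) = (\<Prod>i\<in>{1..<n}. b (x (i-1)) (x i))"
        by (intro prod.cong) auto
      have "(x(n := y)) 0 = x 0" "(x(n := y)) (n-1) = x (n-1)" "(x(n := y)) n = y" using n by auto
      then show ?thesis unfolding Pn_def p0 p1 by simp
    qed
    have "(\<integral>\<^sup>+y. ?f (x(n := y)) \<partial>lborel)
        = (\<integral>\<^sup>+y. (indicator (ord_simplex n t0) x * ennreal (Pn a b n x)) * (indicator {x (n-1)..t0} y * ennreal (b (x (n-1)) y) * g y) \<partial>lborel)"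
    proof (intro nn_integral_cong)
      fix y
      show "?f (x(n := y)) = (indicator (ord_simplex n t0) x * ennreal (Pn a b n x)) * (indicator {x (n-1)..t0} y * ennreal (b (x (n-1)) y) * g y)"
        using Pn_nn[of n x] b_nn[of "x (n-1)" y]
        by (simp add: simp_iff Pn_upd indicator_def ennreal_mult mult.assoc)
    qed
    also have "\<dots> = indicator (ord_simplex n t0) x * ennreal (Pn a b n x) * Top b t0 g (x (n-1))"
    proof -
      have ym: "(\<lambda>y. indicator {x (n-1)..t0} y * ennreal (b (x (n-1)) y) * g y) \<in> borel_measurable lborel"
        using measurable_Pair2[OF Top_integrand_meas[OF gm], of "x (n-1)"] by simp
      show ?thesis unfolding Top_def by (subst nn_integral_cmult[OF ym]) simp
    qed
    finally show "(\<integral>\<^sup>+y. ?f (x(n := y)) \<partial>lborel) = indicator (ord_simplex n t0) x * ennreal (Pn a b n x) * Top b t0 g (x (n-1))" .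
  qed
  also have "\<dots> = An a b t0 n (Top b t0 g)" unfolding An_def by simp
  finally show ?thesis .
qed

lemma An_Hn:
  assumes "n \<ge> 1" "g \<in> borel_measurable borel"
  shows "(\<Sum>k<N. An a b t0 (n+k) g) = An a b t0 n (Hn b t0 g N)"
  using assms(1)
proof (induction N arbitrary: n)
  case 0 then show ?case by (simp add: An_zero)
next
  case (Suc N)
  have "(\<Sum>k<Suc N. An a b t0 (n+k) g) = An a b t0 n g + (\<Sum>k<N. An a b t0 (Suc n + k) g)"
    by (subst sum.lessThan_Suc_shift) simp
  also have "(\<Sum>k<N. An a b t0 (Suc n + k) g) = An a b t0 (Suc n) (Hn b t0 g N)"
    using Suc.IH[of "Suc n"] Suc.prems by simp
  also have "\<dots> = An a b t0 n (Top b t0 (Hn b t0 g N))"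
    by (rule An_Suc[OF Suc.prems Hn_meas[OF assms(2)]])
  also have "An a b t0 n g + \<dots> = An a b t0 n (Hn b t0 g (Suc N))"
    using An_add[OF Suc.prems assms(2) Top_meas[OF Hn_meas[OF assms(2)]]] by simp
  finally show ?case .
qed

lemma Top_mono:
  assumes "0 \<le> s" "\<And>y. s \<le> y \<Longrightarrow> y \<le> t0 \<Longrightarrow> f y \<le> h y"
  shows "Top b t0 f s \<le> Top b t0 h s"
  unfolding Top_def
proof (rule nn_integral_mono)
  fix y show "indicator {s..t0} y * ennreal (b s y) * f y \<le> indicator {s..t0} y * ennreal (b s y) * h y"
    using assms by (cases "y \<in> {s..t0}") (auto intro!: mult_left_mono)
qed

lemma Hn_compare:
  assumes "\<And>s. 0 \<le> s \<Longrightarrow> s \<le> t0 \<Longrightarrow> g s + Top b t0 \<phi> s \<le> \<phi> s"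
  shows "0 \<le> s \<Longrightarrow> s \<le> t0 \<Longrightarrow> Hn b t0 g N s \<le> \<phi> s"
proof (induction N arbitrary: s)
  case 0 then show ?case by simp
next
  case (Suc N)
  have "Top b t0 (Hn b t0 g N) s \<le> Top b t0 \<phi> s"
    using Suc by (intro Top_mono) auto
  then have "g s + Top b t0 (Hn b t0 g N) s \<le> g s + Top b t0 \<phi> s" by (rule add_left_mono)
  also have "\<dots> \<le> \<phi> s" using assms Suc.prems by blast
  finally show ?case by simp
qed

lemma series_bound:
  assumes "g \<in> borel_measurable borel" and comp: "\<And>s. 0 \<le> s \<Longrightarrow> s \<le> t0 \<Longrightarrow> g s + Top b t0 \<phi> s \<le> \<phi> s"
  shows "(\<Sum>k<N. An a b t0 (Suc k) g) \<le> An a b t0 1 \<phi>"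
proof -
  have "(\<Sum>k<N. An a b t0 (Suc k) g) = An a b t0 1 (Hn b t0 g N)"
    using An_Hn[OF _ assms(1), of 1 N] by simp
  also have "\<dots> \<le> An a b t0 1 \<phi>"
    by (intro An_mono Hn_compare[OF comp]) auto
  finally show ?thesis .
qed

end


lemma FTC_exp:
  fixes \<rho> f :: "real \<Rightarrow> real"
  assumes rc: "continuous_on {lo..hi} \<rho>" and ab: "lo \<le> \<alpha>" "\<alpha> \<le> \<beta>" "\<beta> \<le> hi"
    and feq: "\<And>y. y \<in> {\<alpha>..\<beta>} \<Longrightarrow> f y = \<rho> y * exp (- integral {lo..y} \<rho>)"
    and fnn: "\<And>y. y \<in> {\<alpha>..\<beta>} \<Longrightarrow> 0 \<le> f y"
  shows "(\<integral>\<^sup>+y. indicator {\<alpha>..\<beta>} y * ennreal (f y) \<partial>lborel)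
       = ennreal (exp (- integral {lo..\<alpha>} \<rho>) - exp (- integral {lo..\<beta>} \<rho>))"
proof -
  define F where "F y = - exp (- integral {lo..y} \<rho>)" for y
  have d: "(F has_vector_derivative (\<rho> y * exp (- integral {lo..y} \<rho>))) (at y within {\<alpha>..\<beta>})"
    if "y \<in> {\<alpha>..\<beta>}" for y
  proof -
    have y: "y \<in> {lo..hi}" using that ab by auto
    have "((\<lambda>u. integral {lo..u} \<rho>) has_vector_derivative \<rho> y) (at y within {lo..hi})"
      by (rule integral_has_vector_derivative[OF rc y])
    then have "((\<lambda>u. integral {lo..u} \<rho>) has_real_derivative \<rho> y) (at y within {lo..hi})"
      by (simp add: has_real_derivative_iff_has_vector_derivative)
    then have "(F has_real_derivative (\<rho> y * exp (- integral {lo..y} \<rho>))) (at y within {lo..hi})"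
      unfolding F_def by (auto intro!: derivative_eq_intros)
    then have "(F has_vector_derivative (\<rho> y * exp (- integral {lo..y} \<rho>))) (at y within {lo..hi})"
      by (simp add: has_real_derivative_iff_has_vector_derivative)
    then show ?thesis
      by (rule has_vector_derivative_within_subset) (use ab in auto)
  qed
  have "((\<lambda>y. \<rho> y * exp (- integral {lo..y} \<rho>)) has_integral (F \<beta> - F \<alpha>)) {\<alpha>..\<beta>}"
    by (rule fundamental_theorem_of_calculus[OF ab(2) d])
  then have "(f has_integral (F \<beta> - F \<alpha>)) {\<alpha>..\<beta>}"
    using feq by (subst has_integral_cong) auto
  from nn_integral_has_integral_lebesgue'[OF fnn this]
  have "(\<integral>\<^sup>+y. ennreal (f y) * indicator {\<alpha>..\<beta>} y \<partial>lborel) = ennreal (F \<beta> - F \<alpha>)" by simp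
  then show ?thesis by (simp add: F_def mult.commute)
qed

context S begin

context fixes w assumes w: "w \<in> W"
begin

lemma rhoi_bnd: "0 \<le> z \<Longrightarrow> z \<le> 1 \<Longrightarrow> 0 \<le> v \<Longrightarrow> v \<le> T \<Longrightarrow> 0 \<le> rhoi \<theta> w z v \<and> rhoi \<theta> w z v \<le> supnorm T w"
  unfolding rhoi_def using W_nonneg[OF adm w rect_i] W_le_supnorm'[OF adm w rect_i] by auto

lemma rhob_bnd: "0 \<le> s \<Longrightarrow> s \<le> v \<Longrightarrow> v \<le> T \<Longrightarrow> 0 \<le> rhob \<theta> w s v \<and> rhob \<theta> w s v \<le> supnorm T w"
  unfolding rhob_def using W_nonneg[OF adm w rect_b] W_le_supnorm'[OF adm w rect_b] by auto

lemma wnorm_nn: "0 \<le> supnorm T w"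
  using supnorm_nonneg[OF adm w] Tpos by simp

lemma cont_rhoi1: "0 \<le> z \<Longrightarrow> z \<le> 1 \<Longrightarrow> continuous_on {0..T} (rhoi \<theta> w z)"
  by (rule cont2[OF cont_rhoi[OF w], of _ "\<lambda>_. z" "\<lambda>v. v", simplified]) (auto intro!: continuous_intros)

lemma cont_rhob1: "0 \<le> s \<Longrightarrow> s \<le> T \<Longrightarrow> continuous_on {s..T} (rhob \<theta> w s)"
  by (rule cont2[OF cont_rhob[OF w], of _ "\<lambda>_. s" "\<lambda>v. v", simplified]) (auto intro!: continuous_intros simp: Tri_def)

lemma int_split_bnd:
  fixes \<rho> :: "real \<Rightarrow> real"
  assumes "continuous_on {lo..hi} \<rho>" "\<And>v. v \<in> {lo..hi} \<Longrightarrow> 0 \<le> \<rho> v \<and> \<rho> v \<le> supnorm T w"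
    "lo \<le> \<alpha>" "\<alpha> \<le> \<beta>" "\<beta> \<le> hi"
  shows "integral {lo..\<beta>} \<rho> = integral {lo..\<alpha>} \<rho> + integral {\<alpha>..\<beta>} \<rho>"
    "0 \<le> integral {\<alpha>..\<beta>} \<rho>" "integral {\<alpha>..\<beta>} \<rho> \<le> supnorm T w * (\<beta> - \<alpha>)"
    "0 \<le> integral {lo..\<alpha>} \<rho>"
proof -
  have ci: "continuous_on {lo..\<beta>} \<rho>" by (rule continuous_on_subset[OF assms(1)]) (use assms in auto)
  show "integral {lo..\<beta>} \<rho> = integral {lo..\<alpha>} \<rho> + integral {\<alpha>..\<beta>} \<rho>"
    using Henstock_Kurzweil_Integration.integral_combine[where a=lo and c=\<alpha> and b=\<beta> and f=\<rho>]
      integrable_continuous_real[OF ci] assms by simp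
  have c2: "continuous_on {\<alpha>..\<beta>} \<rho>" by (rule continuous_on_subset[OF assms(1)]) (use assms in auto)
  have c3: "continuous_on {lo..\<alpha>} \<rho>" by (rule continuous_on_subset[OF assms(1)]) (use assms in auto)
  show "0 \<le> integral {\<alpha>..\<beta>} \<rho>"
    using assms by (intro integral_nonneg integrable_continuous_real c2) auto
  show "0 \<le> integral {lo..\<alpha>} \<rho>"
    using assms by (intro integral_nonneg integrable_continuous_real c3) auto
  have "integral {\<alpha>..\<beta>} \<rho> \<le> integral {\<alpha>..\<beta>} (\<lambda>_. supnorm T w)"
    using assms by (intro integral_le integrable_continuous_real c2) auto
  then show "integral {\<alpha>..\<beta>} \<rho> \<le> supnorm T w * (\<beta> - \<alpha>)" using assms by (simp add: mult.commute)
qed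

lemma Oi_props:
  assumes "0 \<le> z" "z \<le> 1" "0 \<le> \<alpha>" "\<alpha> \<le> \<beta>" "\<beta> \<le> T"
  shows "0 \<le> Omega_i \<theta> w z \<alpha>" "Omega_i \<theta> w z \<alpha> \<le> Omega_i \<theta> w z \<beta>"
    "Omega_i \<theta> w z \<beta> - Omega_i \<theta> w z \<alpha> \<le> supnorm T w * (\<beta> - \<alpha>)"
  using int_split_bnd[OF cont_rhoi1[OF assms(1,2)] _ assms(3-5)] rhoi_bnd[OF assms(1,2)]
  unfolding Omega_i_rhoi by auto

lemma Ob_props:
  assumes "0 \<le> s" "s \<le> \<alpha>" "\<alpha> \<le> \<beta>" "\<beta> \<le> T"
  shows "0 \<le> Omega_b \<theta> w s \<alpha>" "Omega_b \<theta> w s \<alpha> \<le> Omega_b \<theta> w s \<beta>"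
    "Omega_b \<theta> w s \<beta> - Omega_b \<theta> w s \<alpha> \<le> supnorm T w * (\<beta> - \<alpha>)"
  using int_split_bnd[OF cont_rhob1[of s] _ assms(2-4)] rhob_bnd[OF assms(1)] assms
  unfolding Omega_b_rhob by auto

lemma Ob_refl: "Omega_b \<theta> w s s = 0"
  unfolding Omega_b_def by simp

lemma Ah_eq: "0 \<le> z \<Longrightarrow> z \<le> 1 \<Longrightarrow> 0 \<le> v \<Longrightarrow> v \<le> T \<Longrightarrow> Ah \<theta> w T z v = rhoi \<theta> w z v * exp (- Omega_i \<theta> w z v)"
  unfolding Ah_def Ai_def by (simp add: clamp_id')

lemma Bh_eq: "0 \<le> s \<Longrightarrow> s \<le> v \<Longrightarrow> v \<le> T \<Longrightarrow> Bh \<theta> w T s v = rhob \<theta> w s v * exp (- Omega_b \<theta> w s v)"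
  unfolding Bh_def Bf_def by (simp add: clamp_id')

lemma Ch_eq: "0 \<le> s \<Longrightarrow> s \<le> t \<Longrightarrow> Ch \<theta> w t s = exp (- Omega_b \<theta> w s t)"
  unfolding Ch_def Cf_def by (simp add: clamp_id')

lemma Ah_bnd: "0 \<le> Ah \<theta> w T z v \<and> Ah \<theta> w T z v \<le> supnorm T w"
proof -
  have c: "0 \<le> clamp 0 1 z" "clamp 0 1 z \<le> 1" "0 \<le> clamp 0 T v" "clamp 0 T v \<le> T"
    using Tpos by (auto simp: clamp_def)
  have "0 \<le> Omega_i \<theta> w (clamp 0 1 z) (clamp 0 T v)" using Oi_props(1)[OF c(1,2) c(3) order_refl c(4)] .
  then have "exp (- Omega_i \<theta> w (clamp 0 1 z) (clamp 0 T v)) \<le> 1" by simp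
  moreover note rhoi_bnd[OF c]
  ultimately have "0 \<le> rhoi \<theta> w (clamp 0 1 z) (clamp 0 T v) * exp (- Omega_i \<theta> w (clamp 0 1 z) (clamp 0 T v))"
    "rhoi \<theta> w (clamp 0 1 z) (clamp 0 T v) * exp (- Omega_i \<theta> w (clamp 0 1 z) (clamp 0 T v)) \<le> supnorm T w"
    by (simp, metis mult.right_neutral mult_left_mono order_trans)
  then show ?thesis unfolding Ah_def Ai_def by blast
qed

lemma Bh_nn: "0 \<le> Bh \<theta> w T s y"
proof -
  have c: "0 \<le> clamp 0 T s" "clamp 0 T s \<le> clamp (clamp 0 T s) T y" "clamp (clamp 0 T s) T y \<le> T"
    using Tpos by (auto simp: clamp_def)
  show ?thesis unfolding Bh_def Bf_def using rhob_bnd[OF c] by simp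
qed

lemma Ch_nn: "0 \<le> Ch \<theta> w t s" unfolding Ch_def Cf_def by simp

lemma FA: assumes "0 \<le> z" "z \<le> 1" "0 \<le> \<alpha>" "\<alpha> \<le> \<beta>" "\<beta> \<le> T"
  shows "(\<integral>\<^sup>+v. indicator {\<alpha>..\<beta>} v * ennreal (Ah \<theta> w T z v) \<partial>lborel)
    = ennreal (exp (- Omega_i \<theta> w z \<alpha>) - exp (- Omega_i \<theta> w z \<beta>))"
  unfolding Omega_i_rhoi
proof (rule FTC_exp[OF cont_rhoi1[OF assms(1,2)] assms(3-5)])
  fix y assume "y \<in> {\<alpha>..\<beta>}"
  then show "Ah \<theta> w T z y = rhoi \<theta> w z y * exp (- integral {0..y} (rhoi \<theta> w z))"
    using assms by (simp add: Ah_eq Omega_i_rhoi)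
  show "0 \<le> Ah \<theta> w T z y" using Ah_bnd by blast
qed

lemma FB: assumes "0 \<le> s" "s \<le> \<alpha>" "\<alpha> \<le> \<beta>" "\<beta> \<le> T"
  shows "(\<integral>\<^sup>+y. indicator {\<alpha>..\<beta>} y * ennreal (Bh \<theta> w T s y) \<partial>lborel)
    = ennreal (exp (- Omega_b \<theta> w s \<alpha>) - exp (- Omega_b \<theta> w s \<beta>))"
  unfolding Omega_b_rhob
proof (rule FTC_exp[OF cont_rhob1 assms(2-4)])
  fix y assume "y \<in> {\<alpha>..\<beta>}"
  then show "Bh \<theta> w T s y = rhob \<theta> w s y * exp (- integral {s..y} (rhob \<theta> w s))"
    using assms by (simp add: Bh_eq Omega_b_rhob)
  show "0 \<le> Bh \<theta> w T s y" by (rule Bh_nn)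
qed (use assms in auto)

lemma R_inst: "R (Ah \<theta> w T z) (Bh \<theta> w T)"
proof
  show "0 \<le> Ah \<theta> w T z v" for v using Ah_bnd by blast
  show "0 \<le> Bh \<theta> w T s y" for s y by (rule Bh_nn)
  have "continuous_on UNIV (Ah \<theta> w T z)"
    by (rule cont2[OF cont_Ah[OF w], of _ "\<lambda>_. z" "\<lambda>v. v", simplified])
  then show "Ah \<theta> w T z \<in> borel_measurable borel" by (rule borel_measurable_continuous_onI)
  have "(\<lambda>p. Bh \<theta> w T (fst p) (snd p)) \<in> borel_measurable borel"
    using cont_Bh[OF w] by (intro borel_measurable_continuous_onI) (simp add: split_beta')
  then show "(\<lambda>p. Bh \<theta> w T (fst p) (snd p)) \<in> borel_measurable (lborel \<Otimes>\<^sub>M lborel)"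
    by (simp add: lborel_prod)
qed

end

end


lemma ennreal_series_real:
  fixes f :: "nat \<Rightarrow> ennreal"
  assumes B: "0 \<le> B" and le: "\<And>N. (\<Sum>k<N. f k) \<le> ennreal B"
  shows "\<And>k. f k < \<top>" "\<And>N. (\<Sum>k<N. enn2real (f k)) = enn2real (\<Sum>k<N. f k)"
    "summable (\<lambda>k. enn2real (f k))" "(\<Sum>k. enn2real (f k)) \<le> B"
proof -
  show fin: "f k < \<top>" for k
  proof -
    have "f k \<le> (\<Sum>i<Suc k. f i)" by (rule member_le_sum) auto
    also have "\<dots> \<le> ennreal B" by (rule le)
    finally show ?thesis using ennreal_less_top le_less_trans by blast
  qed
  show ps: "(\<Sum>k<N. enn2real (f k)) = enn2real (\<Sum>k<N. f k)" for N
    using fin by (simp add: enn2real_sum)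
  have pb: "(\<Sum>k<N. enn2real (f k)) \<le> B" for N
    unfolding ps by (rule enn2real_leI[OF B le])
  show "summable (\<lambda>k. enn2real (f k))"
    by (rule summableI_nonneg_bounded[OF _ pb]) simp
  then show "(\<Sum>k. enn2real (f k)) \<le> B" by (rule suminf_le_const[OF _ pb])
qed

definition Lk where
  "Lk \<theta> w T z t0 t k = enn2real (An (Ah \<theta> w T z) (Bh \<theta> w T) t0 (Suc k) (\<lambda>s. ennreal (Ch \<theta> w t s)))"
definition Sg where
  "Sg \<theta> w T z t0 t = (\<Sum>k. Lk \<theta> w T z t0 t k)"

context S begin
context fixes w and z :: real assumes w: "w \<in> W" and z0: "0 \<le> z" and z1: "z \<le> 1"
begin

lemma Rw: "R (Ah \<theta> w T z) (Bh \<theta> w T)" by (rule R_inst[OF w])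

lemma c_meas: "0 \<le> t \<Longrightarrow> t \<le> T \<Longrightarrow> (\<lambda>s. ennreal (Ch \<theta> w t s)) \<in> borel_measurable borel"
  using borel_measurable_continuous_onI[OF cont_Ch[OF w]]
  by (rule measurable_compose[OF _ measurable_ennreal])

lemma Oi0: "Omega_i \<theta> w z 0 = 0" by (simp add: Omega_i_def)

lemma Top_one: "0 \<le> s \<Longrightarrow> s \<le> t0 \<Longrightarrow> t0 \<le> T \<Longrightarrow> Top (Bh \<theta> w T) t0 (\<lambda>_. 1) s = ennreal (1 - exp (- Omega_b \<theta> w s t0))"
  unfolding Top_def using FB[OF w, of s s t0] by (simp add: Ob_refl[OF w])

lemma An1_one: "0 \<le> t0 \<Longrightarrow> t0 \<le> T \<Longrightarrow> An (Ah \<theta> w T z) (Bh \<theta> w T) t0 1 (\<lambda>_. 1) = ennreal (1 - exp (- Omega_i \<theta> w z t0))"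
  using R.An_one[OF Rw, of "\<lambda>_. 1" t0] FA[OF w z0 z1, of 0 t0] by (simp add: Oi0)

lemma one_bnd: assumes "0 \<le> t0" "t0 \<le> T"
  shows "0 \<le> 1 - exp (- Omega_i \<theta> w z t0)" "1 - exp (- Omega_i \<theta> w z t0) \<le> 1"
    "1 - exp (- Omega_i \<theta> w z t0) \<le> supnorm T w * t0"
proof -
  have o: "0 \<le> Omega_i \<theta> w z t0" "Omega_i \<theta> w z t0 \<le> supnorm T w * t0"
    using Oi_props[OF w z0 z1, of 0 t0] assms by (auto simp: Oi0)
  show "0 \<le> 1 - exp (- Omega_i \<theta> w z t0)" "1 - exp (- Omega_i \<theta> w z t0) \<le> 1" using o by auto
  have "1 - Omega_i \<theta> w z t0 \<le> exp (- Omega_i \<theta> w z t0)" using exp_ge_add_one_self[of "- Omega_i \<theta> w z t0"] by simp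
  then show "1 - exp (- Omega_i \<theta> w z t0) \<le> supnorm T w * t0" using o by linarith
qed

lemma partial_le:
  assumes "0 \<le> t0" "t0 \<le> t" "t \<le> T"
  shows "(\<Sum>k<N. An (Ah \<theta> w T z) (Bh \<theta> w T) t0 (Suc k) (\<lambda>s. ennreal (Ch \<theta> w t s))) \<le> ennreal (1 - exp (- Omega_i \<theta> w z t0))"
proof -
  have comp: "ennreal (Ch \<theta> w t s) + Top (Bh \<theta> w T) t0 (\<lambda>_. 1) s \<le> 1" if s: "0 \<le> s" "s \<le> t0" for s
  proof -
    have o: "0 \<le> Omega_b \<theta> w s t0" "Omega_b \<theta> w s t0 \<le> Omega_b \<theta> w s t"
      using Ob_props[OF w s(1) s(2), of t] assms by auto
    have "ennreal (Ch \<theta> w t s) + Top (Bh \<theta> w T) t0 (\<lambda>_. 1) s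
        = ennreal (exp (- Omega_b \<theta> w s t)) + ennreal (1 - exp (- Omega_b \<theta> w s t0))"
      using s assms by (simp add: Ch_eq[OF w] Top_one)
    also have "\<dots> = ennreal (exp (- Omega_b \<theta> w s t) + (1 - exp (- Omega_b \<theta> w s t0)))"
      using o by (subst ennreal_plus) auto
    also have "\<dots> \<le> ennreal 1" using o by (intro ennreal_leI) simp
    finally show ?thesis by simp
  qed
  have "(\<Sum>k<N. An (Ah \<theta> w T z) (Bh \<theta> w T) t0 (Suc k) (\<lambda>s. ennreal (Ch \<theta> w t s))) \<le> An (Ah \<theta> w T z) (Bh \<theta> w T) t0 1 (\<lambda>_. 1)"
    by (rule R.series_bound[OF Rw c_meas comp]) (use assms in auto)
  also have "\<dots> = ennreal (1 - exp (- Omega_i \<theta> w z t0))" by (rule An1_one) (use assms in auto)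
  finally show ?thesis .
qed

lemma S1:
  assumes "0 \<le> t0" "t0 \<le> t" "t \<le> T"
  shows "summable (Lk \<theta> w T z t0 t)" "0 \<le> Sg \<theta> w T z t0 t" "Sg \<theta> w T z t0 t \<le> 1"
    "Sg \<theta> w T z t0 t \<le> supnorm T w * t0"
    "\<And>k. An (Ah \<theta> w T z) (Bh \<theta> w T) t0 (Suc k) (\<lambda>s. ennreal (Ch \<theta> w t s)) < \<top>"
proof -
  have B: "0 \<le> 1 - exp (- Omega_i \<theta> w z t0)" using one_bnd assms by auto
  note E = ennreal_series_real[OF B partial_le[OF assms]]
  show "summable (Lk \<theta> w T z t0 t)" using E(3) unfolding Lk_def[abs_def] .
  show "0 \<le> Sg \<theta> w T z t0 t" unfolding Sg_def using E(3) unfolding Lk_def[abs_def]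
    by (intro suminf_nonneg) auto
  show "\<And>k. An (Ah \<theta> w T z) (Bh \<theta> w T) t0 (Suc k) (\<lambda>s. ennreal (Ch \<theta> w t s)) < \<top>" by (rule E(1))
  have "Sg \<theta> w T z t0 t \<le> 1 - exp (- Omega_i \<theta> w z t0)" unfolding Sg_def Lk_def using E(4) .
  moreover have "0 < exp (- Omega_i \<theta> w z t0)" by simp
  ultimately show "Sg \<theta> w T z t0 t \<le> 1" "Sg \<theta> w T z t0 t \<le> supnorm T w * t0"
    using one_bnd[OF assms(1) order_trans[OF assms(2,3)]] by linarith+
qed

end
end


lemma An_split:
  assumes R: "R a b" and n: "n \<ge> 1" and tt: "t0 \<le> t0'" and gm: "g \<in> borel_measurable borel"
  shows "An a b t0' n g = An a b t0 n g + An a b t0' n (\<lambda>s. indicator {t0<..} s * g s)"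
proof -
  have gm': "(\<lambda>s. indicator {t0<..} s * g s) \<in> borel_measurable borel" using gm by measurable
  have "An a b t0 n g + An a b t0' n (\<lambda>s. indicator {t0<..} s * g s)
    = (\<integral>\<^sup>+u. indicator (ord_simplex n t0) u * ennreal (Pn a b n u) * g (u (n-1))
          + indicator (ord_simplex n t0') u * ennreal (Pn a b n u) * (indicator {t0<..} (u (n-1)) * g (u (n-1))) \<partial>PiM {..<n} (\<lambda>_. lborel))"
    unfolding An_def
    by (rule nn_integral_add[symmetric]) (rule R.An_integrand_meas[OF R n gm], rule R.An_integrand_meas[OF R n gm'])
  also have "\<dots> = An a b t0' n g"
    unfolding An_def
  proof (rule nn_integral_cong)
    fix u
    have sub: "u \<in> ord_simplex n t0 \<Longrightarrow> u \<in> ord_simplex n t0'"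
      using tt unfolding ord_simplex_def by auto
    have last: "u \<in> ord_simplex n t0' \<Longrightarrow> u (n-1) \<le> t0 \<Longrightarrow> u \<in> ord_simplex n t0"
    proof -
      assume A: "u \<in> ord_simplex n t0'" "u (n-1) \<le> t0"
      have "u i \<le> t0" if "i < n" for i
      proof -
        have "u i \<le> u (n-1)" by (rule ord_simplex_mono[OF A(1)]) (use that n in auto)
        then show ?thesis using A(2) by simp
      qed
      then show "u \<in> ord_simplex n t0" using A(1) unfolding ord_simplex_def by auto
    qed
    have last2: "u \<in> ord_simplex n t0 \<Longrightarrow> u (n-1) \<le> t0"
      using ord_simplex_mem(2)[of u n t0 "n-1"] n by auto
    show "indicator (ord_simplex n t0) u * ennreal (Pn a b n u) * g (u (n-1))
          + indicator (ord_simplex n t0') u * ennreal (Pn a b n u) * (indicator {t0<..} (u (n-1)) * g (u (n-1)))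
        = indicator (ord_simplex n t0') u * ennreal (Pn a b n u) * g (u (n - 1))"
    proof (cases "u \<in> ord_simplex n t0")
      case True then show ?thesis using sub last2 by (simp add: indicator_def)
    next
      case False
      show ?thesis
      proof (cases "u \<in> ord_simplex n t0'")
        case True
        then have "t0 < u (n-1)" using last False by force
        then show ?thesis using False True by (simp add: indicator_def)
      qed (use False in \<open>simp add: indicator_def\<close>)
    qed
  qed
  finally show ?thesis by simp
qed

context S begin
context fixes w and z :: real assumes w: "w \<in> W" and z0: "0 \<le> z" and z1: "z \<le> 1"
begin

lemma Bh_meas1: "Bh \<theta> w T s \<in> borel_measurable borel"
proof -
  have "continuous_on UNIV (Bh \<theta> w T s)"
    by (rule cont2[OF cont_Bh[OF w], of _ "\<lambda>_. s" "\<lambda>v. v", simplified])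
  then show ?thesis by (rule borel_measurable_continuous_onI)
qed

lemma Ah_meas1: "Ah \<theta> w T z \<in> borel_measurable borel"
  using R.am[OF Rw[OF w z0 z1]] .

lemma exp_diff_bnd:
  fixes x d e :: real
  assumes "0 \<le> d" "d \<le> e"
  shows "exp (- x) - exp (- (x + d)) \<le> exp (- x) * e"
proof -
  have "1 - d \<le> exp (- d)" using exp_ge_add_one_self[of "-d"] by simp
  then have "exp (- x) * (1 - exp (- d)) \<le> exp (- x) * e"
    using assms by (intro mult_left_mono) auto
  then show ?thesis by (simp add: algebra_simps exp_add[symmetric])
qed

lemma S2:
  assumes "0 \<le> t0" "t0 \<le> t" "t \<le> t'" "t' \<le> T"
  shows "Sg \<theta> w T z t0 t' \<le> Sg \<theta> w T z t0 t" "Sg \<theta> w T z t0 t \<le> Sg \<theta> w T z t0 t' + supnorm T w * (t' - t)"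
proof -
  define \<epsilon> where "\<epsilon> = supnorm T w * (t' - t)"
  have \<epsilon>0: "0 \<le> \<epsilon>" unfolding \<epsilon>_def using wnorm_nn[OF w] assms by simp
  let ?A = "\<lambda>t k. An (Ah \<theta> w T z) (Bh \<theta> w T) t0 (Suc k) (\<lambda>s. ennreal (Ch \<theta> w t s))"
  note S1t = S1[OF w z0 z1 assms(1,2) order_trans[OF assms(3,4)]]
  note S1t' = S1[OF w z0 z1 assms(1) order_trans[OF assms(2,3)] assms(4)]
  have ptw: "Ch \<theta> w t' s \<le> Ch \<theta> w t s \<and> Ch \<theta> w t s \<le> Ch \<theta> w t' s + \<epsilon> * Ch \<theta> w t s"
    if s: "0 \<le> s" "s \<le> t0" for s
  proof -
    have o: "Omega_b \<theta> w s t \<le> Omega_b \<theta> w s t'" "Omega_b \<theta> w s t' - Omega_b \<theta> w s t \<le> \<epsilon>"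
      using Ob_props[OF w s(1) _ assms(3,4), of] s assms unfolding \<epsilon>_def by auto
    have "exp (- Omega_b \<theta> w s t) - exp (- (Omega_b \<theta> w s t + (Omega_b \<theta> w s t' - Omega_b \<theta> w s t)))
        \<le> exp (- Omega_b \<theta> w s t) * \<epsilon>"
      using o by (intro exp_diff_bnd) auto
    then show ?thesis using s assms o by (simp add: Ch_eq[OF w] algebra_simps)
  qed
  have cm: "\<And>t. 0 \<le> t \<Longrightarrow> t \<le> T \<Longrightarrow> (\<lambda>s. ennreal (Ch \<theta> w t s)) \<in> borel_measurable borel"
    by (rule c_meas[OF w z0 z1])
  have le1: "?A t' k \<le> ?A t k" for k
    by (intro R.An_mono[OF Rw[OF w z0 z1]]) (use ptw in \<open>auto intro: ennreal_leI\<close>)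
  have le2: "?A t k \<le> ?A t' k + ennreal \<epsilon> * ?A t k" for k
  proof -
    have "?A t k \<le> An (Ah \<theta> w T z) (Bh \<theta> w T) t0 (Suc k) (\<lambda>s. ennreal (Ch \<theta> w t' s) + ennreal \<epsilon> * ennreal (Ch \<theta> w t s))"
    proof (intro R.An_mono[OF Rw[OF w z0 z1]])
      fix s assume "0 \<le> s" "s \<le> t0"
      then have "Ch \<theta> w t s \<le> Ch \<theta> w t' s + \<epsilon> * Ch \<theta> w t s" using ptw by blast
      then show "ennreal (Ch \<theta> w t s) \<le> ennreal (Ch \<theta> w t' s) + ennreal \<epsilon> * ennreal (Ch \<theta> w t s)"
        using \<epsilon>0 Ch_nn[OF w] by (simp add: ennreal_mult[symmetric] ennreal_plus[symmetric] del: ennreal_plus)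
    qed simp
    also have "\<dots> = ?A t' k + ennreal \<epsilon> * ?A t k"
    proof -
      have [measurable]: "(\<lambda>s. ennreal (Ch \<theta> w t s)) \<in> borel_measurable borel"
        "(\<lambda>s. ennreal (Ch \<theta> w t' s)) \<in> borel_measurable borel" using cm assms by auto
      have m2: "(\<lambda>s. ennreal \<epsilon> * ennreal (Ch \<theta> w t s)) \<in> borel_measurable borel" by measurable
      show ?thesis
        using R.An_add[OF Rw[OF w z0 z1] _ _ m2, of "Suc k" "\<lambda>s. ennreal (Ch \<theta> w t' s)"]
          R.An_cmult[OF Rw[OF w z0 z1], of "Suc k" "\<lambda>s. ennreal (Ch \<theta> w t s)"] by simp
    qed
    finally show ?thesis .
  qed
  have L1: "Lk \<theta> w T z t0 t' k \<le> Lk \<theta> w T z t0 t k" for k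
    unfolding Lk_def by (rule enn2real_mono[OF le1 S1t(5)])
  have L2: "Lk \<theta> w T z t0 t k \<le> Lk \<theta> w T z t0 t' k + \<epsilon> * Lk \<theta> w T z t0 t k" for k
  proof -
    have "Lk \<theta> w T z t0 t k \<le> enn2real (?A t' k + ennreal \<epsilon> * ?A t k)"
      unfolding Lk_def by (rule enn2real_mono[OF le2]) (use S1t(5) S1t'(5) \<epsilon>0 in \<open>auto simp: ennreal_mult_less_top\<close>)
    also have "\<dots> = Lk \<theta> w T z t0 t' k + \<epsilon> * Lk \<theta> w T z t0 t k"
      unfolding Lk_def using S1t(5) S1t'(5) \<epsilon>0
      by (subst enn2real_plus) (auto simp: enn2real_mult ennreal_mult_less_top)
    finally show ?thesis .
  qed
  show "Sg \<theta> w T z t0 t' \<le> Sg \<theta> w T z t0 t"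
    unfolding Sg_def by (rule suminf_le[OF L1 S1t'(1) S1t(1)])
  have "Sg \<theta> w T z t0 t \<le> (\<Sum>k. Lk \<theta> w T z t0 t' k + \<epsilon> * Lk \<theta> w T z t0 t k)"
    unfolding Sg_def by (rule suminf_le[OF L2 S1t(1)]) (intro summable_add summable_mult S1t'(1) S1t(1))
  also have "\<dots> = Sg \<theta> w T z t0 t' + \<epsilon> * Sg \<theta> w T z t0 t"
    unfolding Sg_def by (subst suminf_add[symmetric]) (auto intro: summable_mult S1t'(1) S1t(1) simp: suminf_mult[OF S1t(1)])
  also have "\<dots> \<le> Sg \<theta> w T z t0 t' + \<epsilon>"
    using S1t(3) \<epsilon>0 by (simp add: mult_left_le)
  finally show "Sg \<theta> w T z t0 t \<le> Sg \<theta> w T z t0 t' + supnorm T w * (t' - t)" unfolding \<epsilon>_def .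
qed

lemma S3:
  assumes "0 \<le> t0" "t0 \<le> t0'" "t0' \<le> t" "t \<le> T"
  shows "Sg \<theta> w T z t0 t \<le> Sg \<theta> w T z t0' t" "Sg \<theta> w T z t0' t \<le> Sg \<theta> w T z t0 t + 2 * supnorm T w * (t0' - t0)"
proof -
  define \<epsilon> where "\<epsilon> = supnorm T w * (t0' - t0)"
  have \<epsilon>0: "0 \<le> \<epsilon>" unfolding \<epsilon>_def using wnorm_nn[OF w] assms by simp
  let ?a = "Ah \<theta> w T z" and ?b = "Bh \<theta> w T"
  let ?c = "\<lambda>s. ennreal (Ch \<theta> w t s)"
  let ?g = "\<lambda>s. indicator {t0<..} s * ennreal (Ch \<theta> w t s)"
  define \<phi> :: "real \<Rightarrow> ennreal" where "\<phi> s = (if s \<le> t0 then ennreal \<epsilon> else 1)" for s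
  note R = Rw[OF w z0 z1]
  have cm[measurable]: "?c \<in> borel_measurable borel" by (rule c_meas[OF w z0 z1]) (use assms in auto)
  have gm: "?g \<in> borel_measurable borel" by measurable
  have bm[measurable]: "?b s \<in> borel_measurable borel" for s by (rule Bh_meas1)
  have am[measurable]: "?a \<in> borel_measurable borel" by (rule Ah_meas1)
  have \<phi>m: "\<phi> \<in> borel_measurable borel" unfolding \<phi>_def by measurable
  note S1a = S1[OF w z0 z1 assms(1) order_trans[OF assms(2,3)] assms(4)]
  note S1b = S1[OF w z0 z1 order_trans[OF assms(1,2)] assms(3,4)]
  have split: "An ?a ?b t0' (Suc k) ?c = An ?a ?b t0 (Suc k) ?c + An ?a ?b t0' (Suc k) ?g" for k
    by (rule An_split[OF R _ assms(2) cm]) simp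
  have Gfin: "An ?a ?b t0' (Suc k) ?g < \<top>" for k
  proof -
    have "An ?a ?b t0' (Suc k) ?g \<le> An ?a ?b t0 (Suc k) ?c + An ?a ?b t0' (Suc k) ?g"
      by (simp add: add_increasing)
    also have "\<dots> < \<top>" using S1b(5)[of k] split[of k] by simp
    finally show ?thesis .
  qed
  define G where "G k = enn2real (An ?a ?b t0' (Suc k) ?g)" for k
  have Lsplit: "Lk \<theta> w T z t0' t k = Lk \<theta> w T z t0 t k + G k" for k
    unfolding Lk_def G_def split by (rule enn2real_plus) (use S1a(5) Gfin in auto)
  have comp: "?g s + Top ?b t0' \<phi> s \<le> \<phi> s" if s: "0 \<le> s" "s \<le> t0'" for s
  proof (cases "s \<le> t0")
    case True
    define E1 where "E1 = exp (- Omega_b \<theta> w s t0)"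
    define E2 where "E2 = exp (- Omega_b \<theta> w s t0')"
    have o: "0 \<le> Omega_b \<theta> w s t0" "Omega_b \<theta> w s t0 \<le> Omega_b \<theta> w s t0'"
        "Omega_b \<theta> w s t0' - Omega_b \<theta> w s t0 \<le> \<epsilon>"
      using Ob_props[OF w s(1) True assms(2)] assms unfolding \<epsilon>_def by auto
    have E12: "E1 - E2 \<le> E1 * \<epsilon>"
      using exp_diff_bnd[of "Omega_b \<theta> w s t0' - Omega_b \<theta> w s t0" \<epsilon> "Omega_b \<theta> w s t0"] o
      unfolding E1_def E2_def by simp
    have E1le: "E1 \<le> 1" "0 \<le> E1" "E2 \<le> E1" using o unfolding E1_def E2_def by auto
    have "Top ?b t0' \<phi> s \<le> (\<integral>\<^sup>+y. ennreal \<epsilon> * (indicator {s..t0} y * ennreal (?b s y)) + indicator {t0..t0'} y * ennreal (?b s y) \<partial>lborel)"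
      unfolding Top_def
    proof (rule nn_integral_mono)
      fix y
      show "indicator {s..t0'} y * ennreal (?b s y) * \<phi> y \<le> ennreal \<epsilon> * (indicator {s..t0} y * ennreal (?b s y)) + indicator {t0..t0'} y * ennreal (?b s y)"
        unfolding \<phi>_def using True by (cases "y \<le> t0") (auto simp: indicator_def mult_ac)
    qed
    also have "\<dots> = ennreal \<epsilon> * (\<integral>\<^sup>+y. indicator {s..t0} y * ennreal (?b s y) \<partial>lborel) + (\<integral>\<^sup>+y. indicator {t0..t0'} y * ennreal (?b s y) \<partial>lborel)"
      by (subst nn_integral_add) (auto simp: nn_integral_cmult)
    also have "\<dots> = ennreal \<epsilon> * ennreal (1 - E1) + ennreal (E1 - E2)"
      using FB[OF w s(1) order_refl True] FB[OF w s(1) True assms(2)] assms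
      by (simp add: Ob_refl[OF w] E1_def E2_def)
    also have "\<dots> = ennreal (\<epsilon> * (1 - E1) + (E1 - E2))"
      using E1le \<epsilon>0 by (simp add: ennreal_mult)
    also have "\<dots> \<le> ennreal \<epsilon>"
      using E12 E1le \<epsilon>0 by (intro ennreal_leI) (simp add: algebra_simps)
    finally show ?thesis using True by (simp add: \<phi>_def)
  next
    case False
    have o: "Omega_b \<theta> w s t0' \<le> Omega_b \<theta> w s t" "0 \<le> Omega_b \<theta> w s t0'"
      using Ob_props[OF w s(1) s(2) assms(3)] assms by auto
    have "Top ?b t0' \<phi> s \<le> Top ?b t0' (\<lambda>_. 1) s"
      by (rule R.Top_mono[OF R]) (use False s in \<open>auto simp: \<phi>_def\<close>)
    also have "\<dots> = ennreal (1 - exp (- Omega_b \<theta> w s t0'))"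
      by (rule Top_one[OF w z0 z1]) (use s assms False in auto)
    finally have "?g s + Top ?b t0' \<phi> s \<le> ennreal (exp (- Omega_b \<theta> w s t)) + ennreal (1 - exp (- Omega_b \<theta> w s t0'))"
      using False s assms by (auto simp: Ch_eq[OF w] intro!: add_mono)
    also have "\<dots> = ennreal (exp (- Omega_b \<theta> w s t) + (1 - exp (- Omega_b \<theta> w s t0')))"
      using o by (subst ennreal_plus) auto
    also have "\<dots> \<le> ennreal 1" using o by (intro ennreal_leI) simp
    finally show ?thesis using False by (simp add: \<phi>_def)
  qed
  have "An ?a ?b t0' 1 \<phi> \<le> ennreal (2 * \<epsilon>)"
  proof -
    define e0 where "e0 = exp (- Omega_i \<theta> w z t0)"
    define e1 where "e1 = exp (- Omega_i \<theta> w z t0')"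
    have o: "0 \<le> Omega_i \<theta> w z t0" "Omega_i \<theta> w z t0 \<le> Omega_i \<theta> w z t0'"
        "Omega_i \<theta> w z t0' - Omega_i \<theta> w z t0 \<le> \<epsilon>"
      using Oi_props[OF w z0 z1 assms(1,2)] assms unfolding \<epsilon>_def by auto
    have e01: "e0 - e1 \<le> e0 * \<epsilon>"
      using exp_diff_bnd[of "Omega_i \<theta> w z t0' - Omega_i \<theta> w z t0" \<epsilon> "Omega_i \<theta> w z t0"] o
      unfolding e0_def e1_def by simp
    have e0le: "e0 \<le> 1" "0 \<le> e0" "e1 \<le> e0" using o unfolding e0_def e1_def by auto
    have "An ?a ?b t0' 1 \<phi> = (\<integral>\<^sup>+v. indicator {0..t0'} v * ennreal (?a v) * \<phi> v \<partial>lborel)"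
      by (rule R.An_one[OF R \<phi>m])
    also have "\<dots> \<le> (\<integral>\<^sup>+v. ennreal \<epsilon> * (indicator {0..t0} v * ennreal (?a v)) + indicator {t0..t0'} v * ennreal (?a v) \<partial>lborel)"
    proof (rule nn_integral_mono)
      fix v
      show "indicator {0..t0'} v * ennreal (?a v) * \<phi> v \<le> ennreal \<epsilon> * (indicator {0..t0} v * ennreal (?a v)) + indicator {t0..t0'} v * ennreal (?a v)"
        unfolding \<phi>_def using assms by (cases "v \<le> t0") (auto simp: indicator_def mult_ac)
    qed
    also have "\<dots> = ennreal \<epsilon> * (\<integral>\<^sup>+v. indicator {0..t0} v * ennreal (?a v) \<partial>lborel) + (\<integral>\<^sup>+v. indicator {t0..t0'} v * ennreal (?a v) \<partial>lborel)"
      by (subst nn_integral_add) (auto simp: nn_integral_cmult)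
    also have "\<dots> = ennreal \<epsilon> * ennreal (1 - e0) + ennreal (e0 - e1)"
      using FA[OF w z0 z1 order_refl assms(1)] FA[OF w z0 z1 assms(1,2)] assms
      by (simp add: Oi0[OF w z0 z1] e0_def e1_def)
    also have "\<dots> = ennreal (\<epsilon> * (1 - e0) + (e0 - e1))"
      using e0le \<epsilon>0 by (simp add: ennreal_mult)
    also have "\<dots> \<le> ennreal (2 * \<epsilon>)"
    proof (intro ennreal_leI)
      have "\<epsilon> * (1 - e0) = \<epsilon> - e0 * \<epsilon>" by (simp add: algebra_simps)
      then show "\<epsilon> * (1 - e0) + (e0 - e1) \<le> 2 * \<epsilon>" using e01 \<epsilon>0 by linarith
    qed
    finally show ?thesis .
  qed
  then have pl: "(\<Sum>k<N. An ?a ?b t0' (Suc k) ?g) \<le> ennreal (2 * \<epsilon>)" for N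
    using R.series_bound[OF R gm comp, of N] by (meson order_trans)
  note GE = ennreal_series_real[of "2 * \<epsilon>", OF _ pl]
  have Gs: "summable G" "(\<Sum>k. G k) \<le> 2 * \<epsilon>" "0 \<le> (\<Sum>k. G k)"
    using GE(3,4) \<epsilon>0 unfolding G_def[abs_def] by (auto intro: suminf_nonneg)
  have "Sg \<theta> w T z t0' t = Sg \<theta> w T z t0 t + (\<Sum>k. G k)"
    unfolding Sg_def Lsplit by (rule suminf_add[symmetric, OF S1a(1) Gs(1)])
  then show "Sg \<theta> w T z t0 t \<le> Sg \<theta> w T z t0' t" "Sg \<theta> w T z t0' t \<le> Sg \<theta> w T z t0 t + 2 * supnorm T w * (t0' - t0)"
    using Gs unfolding \<epsilon>_def by auto
qed

end
end


lemma lborel_meas_iff: "f \<in> borel_measurable N \<Longrightarrow> f \<in> N \<rightarrow>\<^sub>M lborel"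
  by (simp add: measurable_cong_sets[OF refl sets_lborel])

lemma comp3:
  assumes "f \<in> N \<rightarrow>\<^sub>M M" "g \<in> borel_measurable N" "h \<in> borel_measurable N"
    "(\<lambda>p. F (fst p) (fst (snd p)) (snd (snd p))) \<in> borel_measurable (M \<Otimes>\<^sub>M (lborel \<Otimes>\<^sub>M lborel))"
  shows "(\<lambda>x. F (f x) (g x) (h x)) \<in> borel_measurable N"
  using measurable_compose[OF measurable_Pair[OF assms(1) measurable_Pair[OF lborel_meas_iff[OF assms(2)] lborel_meas_iff[OF assms(3)]]] assms(4)]
  by simp

context SM begin

abbreviation "M2 \<equiv> lam \<Otimes>\<^sub>M (lborel :: real measure)"

definition sig' where "sig' \<sigma> p = \<sigma> (fst p) (clamp 0 1 (snd p))"

lemma sig'_meas: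
  assumes "(\<lambda>(w, y). \<sigma> w y) \<in> borel_measurable (lam \<Otimes>\<^sub>M restrict_space lborel {0..1})"
  shows "sig' \<sigma> \<in> borel_measurable M2"
proof -
  have cm: "(\<lambda>x::real. clamp 0 1 x) \<in> lborel \<rightarrow>\<^sub>M lborel"
    unfolding clamp_def by measurable
  have "(\<lambda>p::_\<times>real. (fst p, clamp 0 1 (snd p))) \<in> M2 \<rightarrow>\<^sub>M (lam \<Otimes>\<^sub>M restrict_space lborel {0..1})"
  proof (intro measurable_Pair measurable_restrict_space2)
    show "(\<lambda>p::_\<times>real. clamp 0 1 (snd p)) \<in> space M2 \<rightarrow> {0..1}" by (auto simp: clamp_def)
    show "(\<lambda>p::_\<times>real. clamp 0 1 (snd p)) \<in> M2 \<rightarrow>\<^sub>M lborel"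
      by (rule measurable_compose[OF measurable_snd cm])
  qed simp
  from measurable_compose[OF this assms] show ?thesis unfolding sig'_def by simp
qed

lemma Eh_joint: "0 \<le> t \<Longrightarrow> t \<le> T \<Longrightarrow> (\<lambda>p. Eh \<theta> (fst p) t (snd p)) \<in> borel_measurable M2"
  using comp3[where F="\<lambda>w x y. Eh \<theta> w t x", OF measurable_fst measurable_snd borel_measurable_const meas_Eh]
  by simp

lemma supnorm_meas: "(\<lambda>w. supnorm T w) \<in> borel_measurable lam"
proof (rule sfilter_measurable[OF lsets lspace])
  fix w assume w: "w \<in> W"
  have ne: "rect T \<noteq> {}" using Tpos by (auto simp: rect_def)
  have key: "supnorm T v \<le> supnorm T w + supdist T v w" if v: "v \<in> W" for v
    unfolding supnorm_def[of T v]
  proof (rule cSUP_least[OF ne])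
    fix p assume p: "p \<in> rect T"
    have "\<bar>v p\<bar> \<le> \<bar>w p\<bar> + \<bar>v p - w p\<bar>" by simp
    also have "\<dots> \<le> supnorm T w + supdist T v w"
      using W_le_supnorm[OF adm w p] supdist_le[OF adm v w p] by simp
    finally show "\<bar>v p\<bar> \<le> supnorm T w + supdist T v w" .
  qed
  have key2: "supnorm T w \<le> supnorm T v + supdist T v w" if v: "v \<in> W" for v
    unfolding supnorm_def[of T w]
  proof (rule cSUP_least[OF ne])
    fix p assume p: "p \<in> rect T"
    have "\<bar>w p\<bar> \<le> \<bar>v p\<bar> + \<bar>v p - w p\<bar>" by simp
    also have "\<dots> \<le> supnorm T v + supdist T v w"
      using W_le_supnorm[OF adm v p] supdist_le[OF adm v w p] by simp
    finally show "\<bar>w p\<bar> \<le> supnorm T v + supdist T v w" .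
  qed
  show "((\<lambda>w. supnorm T w) \<longlongrightarrow> supnorm T w) (sfilter T W w)"
  proof (rule tendstoI)
    fix e :: real assume "e > 0"
    show "eventually (\<lambda>v. dist (supnorm T v) (supnorm T w) < e) (sfilter T W w)"
      unfolding eventually_sfilter
      using key key2 \<open>e > 0\<close> by (intro exI[of _ e]) (force simp: dist_real_def abs_less_iff)
  qed
qed

lemma An_joint:
  assumes "0 \<le> t" "t \<le> T"
  shows "(\<lambda>p. An (Ah \<theta> (fst p) T (snd p)) (Bh \<theta> (fst p) T) t0 (Suc k) (\<lambda>s. ennreal (Ch \<theta> (fst p) t s)))
    \<in> borel_measurable M2"
proof -
  interpret P: finite_product_sigma_finite "\<lambda>_::nat. lborel::real measure" "{..<Suc k}"
    by standard simp
  let ?N = "M2 \<Otimes>\<^sub>M PiM {..<Suc k} (\<lambda>_::nat. lborel::real measure)"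
  have uc: "(\<lambda>x. snd x i) \<in> borel_measurable ?N" if "i < Suc k" for i
    by (rule measurable_compose[OF measurable_snd comp_meas[OF that]])
  have f1: "(\<lambda>x. fst (fst x)) \<in> ?N \<rightarrow>\<^sub>M lam" by measurable
  have f2: "(\<lambda>x. snd (fst x)) \<in> borel_measurable ?N"
    using measurable_compose[OF measurable_fst measurable_snd[of lam lborel]] by (simp add: measurable_cong_sets[OF refl sets_lborel])
  have mA: "(\<lambda>x. Ah \<theta> (fst (fst x)) T (snd (fst x)) (snd x 0)) \<in> borel_measurable ?N"
    by (rule comp3[where F="\<lambda>w a b. Ah \<theta> w T a b", OF f1 f2 uc meas_Ah]) simp
  have mB: "(\<lambda>x. Bh \<theta> (fst (fst x)) T (snd x (i-1)) (snd x i)) \<in> borel_measurable ?N" if "i \<in> {1..<Suc k}" for i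
    by (rule comp3[where F="\<lambda>w a b. Bh \<theta> w T a b", OF f1 uc uc meas_Bh]) (use that in auto)
  have mC: "(\<lambda>x. Ch \<theta> (fst (fst x)) t (snd x k)) \<in> borel_measurable ?N"
    by (rule comp3[where F="\<lambda>w a b. Ch \<theta> w t a", OF f1 uc borel_measurable_const meas_Ch[OF assms]]) simp
  have mS: "(\<lambda>x. indicator (ord_simplex (Suc k) t0) (snd x) :: ennreal) \<in> borel_measurable ?N"
    by (rule measurable_compose[OF measurable_snd borel_measurable_indicator[OF ord_simplex_sets]])
  have "(\<lambda>x. indicator (ord_simplex (Suc k) t0) (snd x) *
      ennreal (Ah \<theta> (fst (fst x)) T (snd (fst x)) (snd x 0) * (\<Prod>i\<in>{1..<Suc k}. Bh \<theta> (fst (fst x)) T (snd x (i-1)) (snd x i))) *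
      ennreal (Ch \<theta> (fst (fst x)) t (snd x k))) \<in> borel_measurable ?N"
    using mA mB mC mS by measurable
  then have "(\<lambda>(p, u). indicator (ord_simplex (Suc k) t0) u * ennreal (Pn (Ah \<theta> (fst p) T (snd p)) (Bh \<theta> (fst p) T) (Suc k) u)
       * ennreal (Ch \<theta> (fst p) t (u (Suc k - 1)))) \<in> borel_measurable ?N"
    by (simp add: Pn_def split_beta')
  from P.borel_measurable_nn_integral[OF this] show ?thesis unfolding An_def by simp
qed

lemma Sg_joint:
  assumes "0 \<le> t" "t \<le> T"
  shows "(\<lambda>p. Sg \<theta> (fst p) T (snd p) t0 t) \<in> borel_measurable M2"
  unfolding Sg_def Lk_def using An_joint[OF assms] by measurable

end


locale SG = SM +
  fixes \<sigma> :: "(real \<times> real \<Rightarrow> real) \<Rightarrow> real \<Rightarrow> real"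
  assumes lam_prob: "prob_space lam"
    and M_W_finite: "(\<integral>\<^sup>+ w. ennreal (supnorm T w) \<partial>lam) < \<infinity>"
    and \<sigma>_nonneg: "\<forall>w\<in>W. \<forall>y\<in>{0..1}. 0 \<le> \<sigma> w y"
    and \<sigma>_meas: "(\<lambda>(w, y). \<sigma> w y) \<in> borel_measurable (lam \<Otimes>\<^sub>M restrict_space lborel {0..1})"
    and \<sigma>_int_w: "\<forall>y\<in>{0..1}. (\<integral>\<^sup>+ w. ennreal (\<sigma> w y) \<partial>lam) = 1"
    and \<sigma>_int_z: "\<forall>w\<in>W. (\<integral>\<^sup>+ z \<in> {0..1}. ennreal (\<sigma> w z) \<partial>lborel) = 1"
begin

definition "MW = enn2real (\<integral>\<^sup>+ w. ennreal (supnorm T w) \<partial>lam)"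

lemma MW: "(\<integral>\<^sup>+ w. ennreal (supnorm T w) \<partial>lam) = ennreal MW" "0 \<le> MW"
  unfolding MW_def using M_W_finite by (auto simp: less_top)

abbreviation "sg \<equiv> sig' \<sigma>"

lemma sg_meas[measurable]: "sg \<in> borel_measurable M2"
  by (rule sig'_meas[OF \<sigma>_meas])

lemma sg_nn: "p \<in> space M2 \<Longrightarrow> 0 \<le> sg p"
  unfolding sig'_def using \<sigma>_nonneg by (auto simp: space_pair_measure lspace clamp_def)

lemma sg_eq: "0 \<le> snd p \<Longrightarrow> snd p \<le> 1 \<Longrightarrow> sg p = \<sigma> (fst p) (snd p)"
  unfolding sig'_def by (simp add: clamp_id')

lemma D_sets[measurable]: "W \<times> A \<in> sets M2" if "A \<in> sets borel" for A
  using that by (metis lspace pair_measureI sets.top sets_lborel)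

lemma T1:
  assumes "0 \<le> a" "a \<le> b" "b \<le> 1"
  shows "(\<integral>\<^sup>+ p. indicator (W \<times> {a..<b}) p * ennreal (sg p) \<partial>M2) = ennreal (b - a)"
proof -
  interpret lp: prob_space lam by (rule lam_prob)
  interpret pair_sigma_finite lam "lborel :: real measure"
    by (intro pair_sigma_finite.intro lp.sigma_finite_measure_axioms lborel.sigma_finite_measure_axioms)
  have "(\<integral>\<^sup>+ p. indicator (W \<times> {a..<b}) p * ennreal (sg p) \<partial>M2)
      = (\<integral>\<^sup>+ y. (\<integral>\<^sup>+ x. indicator (W \<times> {a..<b}) (x, y) * ennreal (sg (x, y)) \<partial>lam) \<partial>lborel)"
    by (rule nn_integral_snd[symmetric]) measurable
  also have "\<dots> = (\<integral>\<^sup>+ y. indicator {a..<b} y \<partial>lborel)"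
  proof (rule nn_integral_cong)
    fix y :: real
    show "(\<integral>\<^sup>+ x. indicator (W \<times> {a..<b}) (x, y) * ennreal (sg (x, y)) \<partial>lam) = indicator {a..<b} y"
    proof (cases "y \<in> {a..<b}")
      case True
      have "(\<integral>\<^sup>+ x. indicator (W \<times> {a..<b}) (x, y) * ennreal (sg (x, y)) \<partial>lam) = (\<integral>\<^sup>+ x. ennreal (\<sigma> x y) \<partial>lam)"
        by (rule nn_integral_cong) (use True assms in \<open>auto simp: lspace indicator_def sg_eq\<close>)
      also have "\<dots> = 1" using \<sigma>_int_w True assms by auto
      finally show ?thesis using True by simp
    next
      case False
      then have "\<And>x. indicator (W \<times> {a..<b}) (x, y) * ennreal (sg (x, y)) = (0::ennreal)"
        by (simp add: indicator_def)
      then show ?thesis using False by simp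
    qed
  qed
  also have "\<dots> = ennreal (b - a)" using assms by simp
  finally show ?thesis .
qed

lemma T2:
  "(\<integral>\<^sup>+ p. indicator (W \<times> {0..<1}) p * ennreal (sg p * supnorm T (fst p)) \<partial>M2) \<le> ennreal MW"
proof -
  have [measurable]: "(\<lambda>p. supnorm T (fst p)) \<in> borel_measurable M2"
    using measurable_compose[OF measurable_fst supnorm_meas] .
  have "(\<integral>\<^sup>+ p. indicator (W \<times> {0..<1}) p * ennreal (sg p * supnorm T (fst p)) \<partial>M2)
      = (\<integral>\<^sup>+ x. (\<integral>\<^sup>+ y. indicator (W \<times> {0..<1}) (x, y) * ennreal (sg (x, y) * supnorm T x) \<partial>lborel) \<partial>lam)"
  proof -
    have fm: "(\<lambda>p. indicator (W \<times> {0..<1}) p * ennreal (sg p * supnorm T (fst p))) \<in> borel_measurable M2"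
      by measurable
    show ?thesis using lborel.nn_integral_fst[OF fm] by simp
  qed
  also have "\<dots> \<le> (\<integral>\<^sup>+ x. ennreal (supnorm T x) \<partial>lam)"
  proof (rule nn_integral_mono)
    fix x assume x: "x \<in> space lam"
    then have xW: "x \<in> W" using lspace by simp
    have n0: "0 \<le> supnorm T x" by (rule wnorm_nn[OF xW])
    have "(\<integral>\<^sup>+ y. indicator (W \<times> {0..<1}) (x, y) * ennreal (sg (x, y) * supnorm T x) \<partial>lborel)
        \<le> (\<integral>\<^sup>+ y. ennreal (supnorm T x) * (ennreal (\<sigma> x y) * indicator {0..1} y) \<partial>lborel)"
    proof (rule nn_integral_mono)
      fix y :: real
      show "indicator (W \<times> {0..<1}) (x, y) * ennreal (sg (x, y) * supnorm T x) \<le> ennreal (supnorm T x) * (ennreal (\<sigma> x y) * indicator {0..1} y)"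
      proof (cases "y \<in> {0..<1}")
        case True
        then have "0 \<le> \<sigma> x y" using \<sigma>_nonneg xW by auto
        then show ?thesis using True xW n0 by (simp add: sg_eq indicator_def ennreal_mult mult.commute)
      qed (auto simp: indicator_def)
    qed
    also have "\<dots> = ennreal (supnorm T x) * (\<integral>\<^sup>+ y \<in> {0..1}. ennreal (\<sigma> x y) \<partial>lborel)"
    proof (rule nn_integral_cmult)
      have "(\<lambda>y. \<sigma> x y) \<in> borel_measurable (restrict_space lborel {0..1})"
        using measurable_Pair2[OF \<sigma>_meas, of x] x by simp
      then have "(\<lambda>y. indicator {0..1} y *\<^sub>R \<sigma> x y) \<in> borel_measurable lborel"
        by (subst (asm) borel_measurable_restrict_space_iff) auto
      then have m: "(\<lambda>y. ennreal (indicator {0..1} y *\<^sub>R \<sigma> x y)) \<in> borel_measurable lborel" by measurable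
      show "(\<lambda>y. ennreal (\<sigma> x y) * indicator {0..1} y) \<in> borel_measurable lborel"
        apply (subst measurable_cong[where g="\<lambda>y. ennreal (indicator {0..1} y *\<^sub>R \<sigma> x y)"])
         apply (simp add: indicator_def)
        apply (rule m)
        done
    qed
    also have "\<dots> = ennreal (supnorm T x)" using \<sigma>_int_z xW by simp
    finally show "(\<integral>\<^sup>+ y. indicator (W \<times> {0..<1}) (x, y) * ennreal (sg (x, y) * supnorm T x) \<partial>lborel) \<le> ennreal (supnorm T x)" .
  qed
  also have "\<dots> = ennreal MW" by (rule MW(1))
  finally show ?thesis .
qed

end


context SG begin

lemma jump_eq:
  assumes w: "w \<in> W" and z: "0 \<le> z" "z \<le> 1" and s: "0 \<le> s" "s \<le> t" "t \<le> T"
  shows "(LINT u : ord_simplex (Suc k) s | PiM {..<Suc k} (\<lambda>_. lborel). jump_integrand \<theta> w z t (Suc k) u)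
    = Lk \<theta> w T z s t k"
proof -
  let ?P = "PiM {..<Suc k} (\<lambda>_::nat. lborel::real measure)"
  let ?A = "ord_simplex (Suc k) s"
  note R = Rw[OF w z]
  define h where "h u = indicator ?A u * (Pn (Ah \<theta> w T z) (Bh \<theta> w T) (Suc k) u * Ch \<theta> w t (u k))" for u
  have pt: "indicator ?A u *\<^sub>R jump_integrand \<theta> w z t (Suc k) u = h u" for u
  proof (cases "u \<in> ?A")
    case True
    have m: "0 \<le> u i" "u i \<le> s" if "i < Suc k" for i using ord_simplex_mem[OF True that] by auto
    have mono: "u i \<le> u j" if "i \<le> j" "j < Suc k" for i j by (rule ord_simplex_mono[OF True that])
    have e1: "Ah \<theta> w T z (u 0) = w (\<theta> (z, 0) (u 0), u 0) * exp (- Omega_i \<theta> w z (u 0))"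
      using Ah_eq[OF w z, of "u 0"] m[of 0] s by (simp add: rhoi_def)
    have e2: "(\<Prod>i\<in>{1..<Suc k}. Bh \<theta> w T (u (i-1)) (u i))
      = (\<Prod>i\<in>{1..<Suc k}. w (\<theta> (0, u (i - 1)) (u i), u i) * exp (- Omega_b \<theta> w (u (i - 1)) (u i)))"
    proof (rule prod.cong)
      fix i assume i: "i \<in> {1..<Suc k}"
      have "0 \<le> u (i-1)" "u (i-1) \<le> u i" "u i \<le> T" using m[of "i-1"] m[of i] mono[of "i-1" i] i s by auto
      then show "Bh \<theta> w T (u (i-1)) (u i) = w (\<theta> (0, u (i - 1)) (u i), u i) * exp (- Omega_b \<theta> w (u (i - 1)) (u i))"
        by (simp add: Bh_eq[OF w] rhob_def)
    qed simp
    have e3: "Ch \<theta> w t (u k) = exp (- Omega_b \<theta> w (u k) t)"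
      using Ch_eq[OF w, of "u k" t] m[of k] s by simp
    have "jump_integrand \<theta> w z t (Suc k) u = Pn (Ah \<theta> w T z) (Bh \<theta> w T) (Suc k) u * Ch \<theta> w t (u k)"
      unfolding jump_integrand_def Pn_def e1 e2 e3 by simp
    then show ?thesis by (simp add: h_def True)
  qed (simp add: h_def)
  have cm: "(\<lambda>u. Ch \<theta> w t (u k)) \<in> borel_measurable ?P"
    using measurable_compose[OF comp_meas[of k "Suc k"] borel_measurable_continuous_onI[OF cont_Ch[OF w]]] s by simp
  have hm: "h \<in> borel_measurable ?P"
    unfolding h_def using R.Pn_meas[OF R, of "Suc k"] cm ord_simplex_sets[of "Suc k" s] by measurable
  have hnn: "0 \<le> h u" for u
    unfolding h_def using R.Pn_nn[OF R] Ch_nn[OF w] by simp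
  have "(LINT u : ?A | ?P. jump_integrand \<theta> w z t (Suc k) u) = integral\<^sup>L ?P h"
    unfolding set_lebesgue_integral_def using pt by simp
  also have "\<dots> = enn2real (\<integral>\<^sup>+ u. ennreal (h u) \<partial>?P)"
    by (rule integral_eq_nn_integral[OF hm]) (simp add: hnn)
  also have "(\<integral>\<^sup>+ u. ennreal (h u) \<partial>?P) = An (Ah \<theta> w T z) (Bh \<theta> w T) s (Suc k) (\<lambda>s. ennreal (Ch \<theta> w t s))"
    unfolding An_def
  proof (rule nn_integral_cong)
    fix u
    show "ennreal (h u) = indicator ?A u * ennreal (Pn (Ah \<theta> w T z) (Bh \<theta> w T) (Suc k) u) * ennreal (Ch \<theta> w t (u (Suc k - 1)))"
      unfolding h_def using R.Pn_nn[OF R] Ch_nn[OF w] by (simp add: indicator_def ennreal_mult)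
  qed
  finally show ?thesis unfolding Lk_def .
qed

lemma sum_eq:
  assumes w: "w \<in> W" and z: "0 \<le> z" "z \<le> 1" and s: "0 \<le> s" "s \<le> t" "t \<le> T"
  shows "(\<Sum>k. (LINT u : ord_simplex (Suc k) s | PiM {..<Suc k} (\<lambda>_. lborel). jump_integrand \<theta> w z t (Suc k) u))
    = Sg \<theta> w T z s t"
  unfolding Sg_def using jump_eq[OF assms] by simp

lemma Eh_bnd: assumes "w \<in> W" "0 \<le> t" "t \<le> T" shows "0 \<le> Eh \<theta> w t z" "Eh \<theta> w t z \<le> 1"
proof -
  have "0 \<le> Omega_i \<theta> w (clamp 0 1 z) t"
    using Oi_props(1)[OF assms(1), of "clamp 0 1 z" t t] assms by (auto simp: clamp_def)
  then show "0 \<le> Eh \<theta> w t z" "Eh \<theta> w t z \<le> 1" unfolding Eh_def Ei_def by auto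
qed

lemma Eh_eq: "0 \<le> z \<Longrightarrow> z \<le> 1 \<Longrightarrow> Eh \<theta> w t z = exp (- Omega_i \<theta> w z t)"
  unfolding Eh_def Ei_def by (simp add: clamp_id')

lemma Eh_diff: assumes w: "w \<in> W" and z: "0 \<le> z" "z \<le> 1" and t: "0 \<le> t" "t \<le> T" "0 \<le> t'" "t' \<le> T"
  shows "\<bar>Eh \<theta> w t z - Eh \<theta> w t' z\<bar> \<le> supnorm T w * \<bar>t - t'\<bar>"
proof -
  have *: "\<bar>exp (- Omega_i \<theta> w z a) - exp (- Omega_i \<theta> w z b)\<bar> \<le> supnorm T w * (b - a)"
    if ab: "0 \<le> a" "a \<le> b" "b \<le> T" for a b
  proof -
    note o = Oi_props[OF w z ab]
    have "exp (- Omega_i \<theta> w z a) - exp (- (Omega_i \<theta> w z a + (Omega_i \<theta> w z b - Omega_i \<theta> w z a)))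
        \<le> exp (- Omega_i \<theta> w z a) * (supnorm T w * (b - a))"
      using o by (intro exp_diff_bnd[OF w z]) auto
    also have "\<dots> \<le> supnorm T w * (b - a)"
    proof -
      have "0 \<le> supnorm T w * (b - a)" using wnorm_nn[OF w] ab by simp
      moreover have "exp (- Omega_i \<theta> w z a) \<le> 1" "0 \<le> exp (- Omega_i \<theta> w z a)" using o by auto
      ultimately show ?thesis using mult_left_le_one_le by blast
    qed
    finally have "exp (- Omega_i \<theta> w z a) - exp (- Omega_i \<theta> w z b) \<le> supnorm T w * (b - a)" by simp
    moreover have "exp (- Omega_i \<theta> w z b) \<le> exp (- Omega_i \<theta> w z a)" using o by simp
    ultimately show ?thesis by simp
  qed
  show ?thesis
  proof (cases "t \<le> t'")
    case True then show ?thesis using *[of t t'] t z by (simp add: Eh_eq)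
  next
    case False then show ?thesis using *[of t' t] t z by (simp add: Eh_eq abs_minus_commute)
  qed
qed

lemma Sg_diff:
  assumes w: "w \<in> W" and z: "0 \<le> z" "z \<le> 1"
    and st: "0 \<le> s" "s \<le> t" "t \<le> T" "0 \<le> s'" "s' \<le> t'" "t' \<le> T"
  shows "\<bar>Sg \<theta> w T z s t - Sg \<theta> w T z s' t'\<bar> \<le> supnorm T w * (2 * \<bar>s - s'\<bar> + \<bar>t - t'\<bar>)"
proof -
  define M where "M = max t t'"
  have M: "t \<le> M" "t' \<le> M" "M \<le> T" using st by (auto simp: M_def)
  have a: "\<bar>Sg \<theta> w T z s t - Sg \<theta> w T z s M\<bar> \<le> supnorm T w * (M - t)"
    using S2[OF w z st(1,2) M(1,3)] by simp
  have b: "\<bar>Sg \<theta> w T z s' t' - Sg \<theta> w T z s' M\<bar> \<le> supnorm T w * (M - t')"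
    using S2[OF w z st(4,5) M(2,3)] by simp
  have c: "\<bar>Sg \<theta> w T z s M - Sg \<theta> w T z s' M\<bar> \<le> 2 * supnorm T w * \<bar>s - s'\<bar>"
  proof (cases "s \<le> s'")
    case True
    then show ?thesis using S3[OF w z st(1) True _ M(3), of] st M by (simp add: abs_if)
  next
    case False
    then show ?thesis using S3[OF w z st(4) _ _ M(3), of s] st M by (simp add: abs_if)
  qed
  have eqn: "M - t + (M - t') = \<bar>t - t'\<bar>" unfolding M_def by (simp add: max_def abs_if)
  have "supnorm T w * (M - t) + supnorm T w * (M - t') = supnorm T w * (M - t + (M - t'))"
    by (simp only: distrib_left)
  also have "\<dots> = supnorm T w * \<bar>t - t'\<bar>" using eqn by simp
  finally have "supnorm T w * (M - t) + supnorm T w * (M - t') = supnorm T w * \<bar>t - t'\<bar>" .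
  then show ?thesis using a b c by (simp add: algebra_simps abs_le_iff) linarith
qed

end


context SG begin

definition "f1 y t p = indicator (W \<times> {y..<1}) p * (Eh \<theta> (fst p) t (snd p) * sg p)"
definition "f2 s t p = indicator (W \<times> {0..<1}) p * (Sg \<theta> (fst p) T (snd p) s t * sg p)"
definition "Bd p = indicator (W \<times> {0..<1::real}) p * sg p"

lemma set_int_eq:
  assumes "\<And>p. p \<in> space M \<Longrightarrow> indicator A p *\<^sub>R g p = f p"
  shows "(LINT p:A|M. g p) = integral\<^sup>L M f"
  unfolding set_lebesgue_integral_def by (rule Bochner_Integration.integral_cong) (auto simp: assms)

lemma space_M2: "space M2 = W \<times> UNIV" by (simp add: space_pair_measure lspace)

lemma Bd_meas[measurable]: "Bd \<in> borel_measurable M2" unfolding Bd_def by measurable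

lemma Bd_int: "integrable M2 Bd"
proof (rule integrableI_nonneg)
  show "Bd \<in> borel_measurable M2" by (rule Bd_meas)
  show "AE x in M2. 0 \<le> Bd x" using sg_nn by (auto simp: Bd_def)
  have "(\<integral>\<^sup>+ x. ennreal (Bd x) \<partial>M2) = (\<integral>\<^sup>+ p. indicator (W \<times> {0..<1}) p * ennreal (sg p) \<partial>M2)"
    by (rule nn_integral_cong) (simp add: Bd_def indicator_def)
  also have "\<dots> = ennreal (1 - 0)" by (rule T1) auto
  finally show "(\<integral>\<^sup>+ x. ennreal (Bd x) \<partial>M2) < \<infinity>" by simp
qed

lemma f1_meas[measurable]: "0 \<le> t \<Longrightarrow> t \<le> T \<Longrightarrow> f1 y t \<in> borel_measurable M2"
  unfolding f1_def[abs_def] using Eh_joint by measurable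

lemma f2_meas[measurable]: "0 \<le> t \<Longrightarrow> t \<le> T \<Longrightarrow> f2 s t \<in> borel_measurable M2"
  unfolding f2_def[abs_def] using Sg_joint by measurable

lemma f1_int: assumes "0 \<le> y" "0 \<le> t" "t \<le> T" shows "integrable M2 (f1 y t)"
proof (rule Bochner_Integration.integrable_bound[OF Bd_int f1_meas[OF assms(2,3)]])
  show "AE p in M2. norm (f1 y t p) \<le> norm (Bd p)"
  proof (rule AE_I2)
    fix p assume p: "p \<in> space M2"
    show "norm (f1 y t p) \<le> norm (Bd p)"
    proof (cases "p \<in> W \<times> {y..<1}")
      case True
      then have "fst p \<in> W" by auto
      then have "0 \<le> Eh \<theta> (fst p) t (snd p)" "Eh \<theta> (fst p) t (snd p) \<le> 1" using Eh_bnd assms by auto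
      moreover have "0 \<le> sg p" using sg_nn[OF p] .
      ultimately show ?thesis using True assms by (auto simp: f1_def Bd_def abs_mult intro!: mult_left_le_one_le)
    qed (auto simp: f1_def Bd_def)
  qed
qed

lemma f2_int: assumes "0 \<le> s" "s \<le> t" "t \<le> T" shows "integrable M2 (f2 s t)"
proof (rule Bochner_Integration.integrable_bound[OF Bd_int f2_meas])
  show "0 \<le> t" "t \<le> T" using assms by auto
  show "AE p in M2. norm (f2 s t p) \<le> norm (Bd p)"
  proof (rule AE_I2)
    fix p assume p: "p \<in> space M2"
    show "norm (f2 s t p) \<le> norm (Bd p)"
    proof (cases "p \<in> W \<times> {0..<1}")
      case True
      then have w: "fst p \<in> W" and z: "0 \<le> snd p" "snd p \<le> 1" by auto
      note S = S1[OF w z assms]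
      moreover have "0 \<le> sg p" using sg_nn[OF p] .
      ultimately show ?thesis using True by (auto simp: f2_def Bd_def abs_mult intro!: mult_left_le_one_le)
    qed (auto simp: f2_def Bd_def)
  qed
qed

lemma Delta_cases:
  assumes "x \<in> Delta T"
  obtains y s t where "x = ((y, s), t)" "0 \<le> t" "t \<le> T" "s = 0" "0 \<le> y" "y \<le> 1"
  | y s t where "x = ((y, s), t)" "0 \<le> t" "t \<le> T" "y = 0" "0 \<le> s" "s \<le> t" "s \<noteq> 0"
proof -
  from assms obtain y s t where x: "x = ((y,s),t)" and t: "0 \<le> t" "t \<le> T" and g: "(y,s) \<in> Gamma_t t"
    unfolding Delta_def by auto
  from g have disj: "(s = 0 \<and> 0 \<le> y \<and> y \<le> 1) \<or> (y = 0 \<and> 0 \<le> s \<and> s \<le> t)"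
    unfolding Gamma_t_def by auto
  show thesis
  proof (cases "s = 0")
    case True then show ?thesis using that(1)[OF x t True] disj by auto
  next
    case False then show ?thesis using that(2)[OF x t _ _ _ False] disj by auto
  qed
qed

lemma G_rep:
  assumes x: "x \<in> Delta T"
  shows "G lam \<sigma> \<theta> (fst x) (snd x) = 1 - integral\<^sup>L M2 (f1 (fst (fst x)) (snd x)) - integral\<^sup>L M2 (f2 (snd (fst x)) (snd x))"
  using x
proof (cases rule: Delta_cases)
  case (1 y s t)
  have e1: "(LINT p : space lam \<times> {y..<1} | M2. exp (- Omega_i \<theta> (fst p) (snd p) t) * \<sigma> (fst p) (snd p))
      = integral\<^sup>L M2 (f1 y t)"
    unfolding set_lebesgue_integral_def lspace
  proof (rule Bochner_Integration.integral_cong[OF refl])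
    fix p assume "p \<in> space M2"
    show "indicator (W \<times> {y..<1}) p *\<^sub>R (exp (- Omega_i \<theta> (fst p) (snd p) t) * \<sigma> (fst p) (snd p)) = f1 y t p"
      unfolding f1_def using 1 by (auto simp: indicator_def Eh_eq sg_eq)
  qed
  have e2: "integral\<^sup>L M2 (f2 0 t) = 0"
  proof -
    have "f2 0 t p = 0" for p
    proof (cases "p \<in> W \<times> {0..<1}")
      case True
      then have w: "fst p \<in> W" and z: "0 \<le> snd p" "snd p \<le> 1" by auto
      note S = S1[OF w z order_refl 1(2) 1(3)]
      then have "Sg \<theta> (fst p) T (snd p) 0 t = 0" by simp
      then show ?thesis by (simp add: f2_def)
    qed (simp add: f2_def)
    then have "f2 0 t = (\<lambda>p. 0)" by (intro ext)
    then show ?thesis by simp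
  qed
  show ?thesis using 1 e1 e2 by (simp add: G_def)
next
  case (2 y s t)
  have e1: "(LINT p : space lam \<times> {0..<1} | M2. exp (- Omega_i \<theta> (fst p) (snd p) t) * \<sigma> (fst p) (snd p))
      = integral\<^sup>L M2 (f1 0 t)"
    unfolding set_lebesgue_integral_def lspace
  proof (rule Bochner_Integration.integral_cong[OF refl])
    fix p assume "p \<in> space M2"
    show "indicator (W \<times> {0..<1}) p *\<^sub>R (exp (- Omega_i \<theta> (fst p) (snd p) t) * \<sigma> (fst p) (snd p)) = f1 0 t p"
      unfolding f1_def using 2 by (auto simp: indicator_def Eh_eq sg_eq)
  qed
  have e2: "(LINT p : space lam \<times> {0..<1} | M2. (\<Sum>k. (LINT u : ord_simplex (Suc k) s | PiM {..<Suc k} (\<lambda>_. lborel).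
        jump_integrand \<theta> (fst p) (snd p) t (Suc k) u)) * \<sigma> (fst p) (snd p))
      = integral\<^sup>L M2 (f2 s t)"
  proof (rule set_int_eq)
    fix p assume "p \<in> space M2"
    show "indicator (space lam \<times> {0..<1}) p *\<^sub>R ((\<Sum>k. (LINT u : ord_simplex (Suc k) s | PiM {..<Suc k} (\<lambda>_. lborel).
        jump_integrand \<theta> (fst p) (snd p) t (Suc k) u)) * \<sigma> (fst p) (snd p)) = f2 s t p"
    proof (cases "p \<in> W \<times> {0..<1}")
      case True
      then have w: "fst p \<in> W" and z: "0 \<le> snd p" "snd p \<le> 1" by auto
      show ?thesis using True sum_eq[OF w z 2(5,6) 2(3)] z by (simp add: f2_def sg_eq lspace)
    qed (simp add: f2_def lspace)
  qed
  show ?thesis using 2 e1 e2 by (simp add: G_def)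
qed

end


context SG begin

lemma Delta_simple:
  assumes "x \<in> Delta T"
  shows "0 \<le> snd x" "snd x \<le> T" "0 \<le> fst (fst x)" "fst (fst x) \<le> 1" "0 \<le> snd (fst x)" "snd (fst x) \<le> snd x"
  using assms by (cases rule: Delta_cases; simp)+

lemma Q2_int: "integrable M2 (\<lambda>p. indicator (W \<times> {0..<1}) p * (sg p * supnorm T (fst p)))"
  and Q2_le: "integral\<^sup>L M2 (\<lambda>p. indicator (W \<times> {0..<1}) p * (sg p * supnorm T (fst p))) \<le> MW"
proof -
  have [measurable]: "(\<lambda>p. supnorm T (fst p)) \<in> borel_measurable M2"
    using measurable_compose[OF measurable_fst supnorm_meas] .
  have m: "(\<lambda>p. indicator (W \<times> {0..<1}) p * (sg p * supnorm T (fst p))) \<in> borel_measurable M2" by measurable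
  have nn: "AE p in M2. 0 \<le> indicator (W \<times> {0..<1}) p * (sg p * supnorm T (fst p))"
    using sg_nn wnorm_nn by (auto simp: space_M2 indicator_def)
  have eq: "(\<integral>\<^sup>+ p. ennreal (indicator (W \<times> {0..<1}) p * (sg p * supnorm T (fst p))) \<partial>M2)
      = (\<integral>\<^sup>+ p. indicator (W \<times> {0..<1}) p * ennreal (sg p * supnorm T (fst p)) \<partial>M2)"
    by (rule nn_integral_cong) (simp add: indicator_def)
  show "integrable M2 (\<lambda>p. indicator (W \<times> {0..<1}) p * (sg p * supnorm T (fst p)))"
    by (rule integrableI_nonneg[OF m nn]) (use T2 eq in \<open>simp add: le_less_trans\<close>)
  show "integral\<^sup>L M2 (\<lambda>p. indicator (W \<times> {0..<1}) p * (sg p * supnorm T (fst p))) \<le> MW"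
    by (subst integral_eq_nn_integral[OF m nn]) (rule enn2real_leI[OF MW(2)], simp add: eq T2)
qed

lemma Q1_int: assumes "0 \<le> a" "a \<le> b" "b \<le> 1"
  shows "integrable M2 (\<lambda>p. indicator (W \<times> {a..<b}) p * sg p)"
    "integral\<^sup>L M2 (\<lambda>p. indicator (W \<times> {a..<b}) p * sg p) = b - a"
proof -
  have m: "(\<lambda>p. indicator (W \<times> {a..<b}) p * sg p) \<in> borel_measurable M2" by measurable
  have nn: "AE p in M2. 0 \<le> indicator (W \<times> {a..<b}) p * sg p"
    using sg_nn by (auto simp: space_M2 indicator_def)
  have eq: "(\<integral>\<^sup>+ p. ennreal (indicator (W \<times> {a..<b}) p * sg p) \<partial>M2) = ennreal (b - a)"
    using T1[OF assms] by (subst nn_integral_cong[where v="\<lambda>p. indicator (W \<times> {a..<b}) p * ennreal (sg p)"]) (auto simp: indicator_def)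
  show "integrable M2 (\<lambda>p. indicator (W \<times> {a..<b}) p * sg p)"
    by (rule integrableI_nonneg[OF m nn]) (simp add: eq)
  show "integral\<^sup>L M2 (\<lambda>p. indicator (W \<times> {a..<b}) p * sg p) = b - a"
    by (subst integral_eq_nn_integral[OF m nn]) (use assms in \<open>simp add: eq\<close>)
qed

lemma G_lip:
  assumes x: "x \<in> Delta T" and x': "x' \<in> Delta T"
  shows "\<bar>G lam \<sigma> \<theta> (fst x') (snd x') - G lam \<sigma> \<theta> (fst x) (snd x)\<bar> \<le> (1 + 4 * MW) * dist x' x"
proof -
  define y s t where "y = fst (fst x)" "s = snd (fst x)" "t = snd x"
  define y' s' t' where "y' = fst (fst x')" "s' = snd (fst x')" "t' = snd x'"
  note d = Delta_simple[OF x, folded y_s_t_def] and d' = Delta_simple[OF x', folded y'_s'_t'_def]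
  define a b where "a = min y y'" "b = max y y'"
  have ab: "0 \<le> a" "a \<le> b" "b \<le> 1" "b - a = \<bar>y - y'\<bar>" using d d' by (auto simp: a_b_def)
  define c where "c = 2 * (\<bar>s - s'\<bar> + \<bar>t - t'\<bar>)"
  have c0: "0 \<le> c" by (simp add: c_def)
  define F where "F p = f1 y t p - f1 y' t' p + (f2 s t p - f2 s' t' p)" for p
  define Q where "Q p = indicator (W \<times> {a..<b}) p * sg p + c * (indicator (W \<times> {0..<1}) p * (sg p * supnorm T (fst p)))" for p
  have i1: "integrable M2 (f1 y t)" "integrable M2 (f1 y' t')" using f1_int d d' by auto
  have i2: "integrable M2 (f2 s t)" "integrable M2 (f2 s' t')" using f2_int d d' by auto
  have iF: "integrable M2 F" unfolding F_def[abs_def] using i1 i2 by auto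
  have iQ: "integrable M2 Q" unfolding Q_def[abs_def] using Q1_int(1)[OF ab(1-3)] Q2_int by auto
  have diff: "G lam \<sigma> \<theta> (fst x') (snd x') - G lam \<sigma> \<theta> (fst x) (snd x) = integral\<^sup>L M2 F"
    unfolding G_rep[OF x] G_rep[OF x'] F_def y_s_t_def y'_s'_t'_def
    using i1 i2 unfolding y_s_t_def y'_s'_t'_def by simp
  have ptw: "\<bar>F p\<bar> \<le> Q p" if p: "p \<in> space M2" for p
  proof (cases "p \<in> W \<times> {0..<1}")
    case False
    then have "F p = 0" using d d' by (auto simp: F_def f1_def f2_def indicator_def)
    moreover have "0 \<le> Q p" using False ab by (auto simp: Q_def indicator_def)
    ultimately show ?thesis by simp
  next
    case True
    define w z where "w = fst p" "z = snd p"
    have w: "w \<in> W" and z: "0 \<le> z" "z < 1" using True by (auto simp: w_z_def)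
    have sg0: "0 \<le> sg p" using sg_nn[OF p] .
    have nw: "0 \<le> supnorm T w" by (rule wnorm_nn[OF w])
    define E E' where "E = Eh \<theta> w t z" "E' = Eh \<theta> w t' z"
    have E: "0 \<le> E" "E \<le> 1" using Eh_bnd[OF w] d by (auto simp: E_E'_def)
    have EE: "\<bar>E - E'\<bar> \<le> supnorm T w * \<bar>t - t'\<bar>"
      unfolding E_E'_def using Eh_diff[OF w z(1) _ d(1,2) d'(1,2)] z by simp
    define Iy Iy' Iab :: real where "Iy = indicator {y..<1} z" "Iy' = indicator {y'..<1} z" "Iab = indicator {a..<b} z"
    have I01: "0 \<le> Iy'" "Iy' \<le> 1" by (auto simp: Iy_Iy'_Iab_def indicator_def)
    have II: "\<bar>Iy - Iy'\<bar> \<le> Iab" using z by (auto simp: Iy_Iy'_Iab_def a_b_def indicator_def)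
    have SS: "\<bar>Sg \<theta> w T z s t - Sg \<theta> w T z s' t'\<bar> \<le> supnorm T w * (2 * \<bar>s - s'\<bar> + \<bar>t - t'\<bar>)"
      by (rule Sg_diff[OF w z(1) _ d(5,6,2) d'(5,6,2)]) (use z in auto)
    have "\<bar>Iy * E - Iy' * E'\<bar> = \<bar>(Iy - Iy') * E + Iy' * (E - E')\<bar>" by (simp add: algebra_simps)
    also have "\<dots> \<le> \<bar>Iy - Iy'\<bar> * E + Iy' * \<bar>E - E'\<bar>"
      using E I01 by (metis abs_mult abs_of_nonneg abs_triangle_ineq)
    also have "\<dots> \<le> Iab * 1 + 1 * (supnorm T w * \<bar>t - t'\<bar>)"
      using E I01 II EE nw by (intro add_mono mult_mono) auto
    finally have A: "\<bar>Iy * E - Iy' * E'\<bar> \<le> Iab + supnorm T w * \<bar>t - t'\<bar>" by simp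
    have Fp: "F p = (Iy * E - Iy' * E') * sg p + (Sg \<theta> w T z s t - Sg \<theta> w T z s' t') * sg p"
      using True w by (simp add: F_def f1_def f2_def Iy_Iy'_Iab_def E_E'_def w_z_def indicator_def algebra_simps mem_Times_iff)
    have "\<bar>F p\<bar> \<le> \<bar>Iy * E - Iy' * E'\<bar> * sg p + \<bar>Sg \<theta> w T z s t - Sg \<theta> w T z s' t'\<bar> * sg p"
      unfolding Fp using sg0 by (metis abs_mult abs_of_nonneg abs_triangle_ineq)
    also have "\<dots> \<le> (Iab + supnorm T w * \<bar>t - t'\<bar>) * sg p + (supnorm T w * (2 * \<bar>s - s'\<bar> + \<bar>t - t'\<bar>)) * sg p"
      using A SS sg0 by (intro add_mono mult_right_mono) auto
    also have "\<dots> = Q p"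
      using True w by (simp add: Q_def c_def Iy_Iy'_Iab_def w_z_def indicator_def algebra_simps mem_Times_iff)
    finally show ?thesis .
  qed
  have "\<bar>integral\<^sup>L M2 F\<bar> \<le> integral\<^sup>L M2 Q"
  proof -
    have "integral\<^sup>L M2 F \<le> integral\<^sup>L M2 Q" by (rule integral_mono[OF iF iQ]) (use ptw in \<open>force simp: abs_le_iff\<close>)
    moreover have "- integral\<^sup>L M2 F \<le> integral\<^sup>L M2 Q"
    proof -
      have "integral\<^sup>L M2 (\<lambda>p. - F p) \<le> integral\<^sup>L M2 Q"
        by (rule integral_mono) (use iF iQ ptw in \<open>force simp: abs_le_iff\<close>)+
      then show ?thesis by simp
    qed
    ultimately show ?thesis by linarith
  qed
  also have "integral\<^sup>L M2 Q = (b - a) + c * integral\<^sup>L M2 (\<lambda>p. indicator (W \<times> {0..<1}) p * (sg p * supnorm T (fst p)))"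
    unfolding Q_def using Q1_int[OF ab(1-3)] Q2_int by simp
  also have "\<dots> \<le> \<bar>y - y'\<bar> + c * MW"
    using ab c0 Q2_le by (simp add: mult_left_mono)
  also have "\<dots> \<le> (1 + 4 * MW) * dist x' x"
  proof -
    have "\<bar>y - y'\<bar> \<le> dist x' x"
      using dist_fst_le[of "fst x'" "fst x"] dist_fst_le[of x' x] unfolding y_s_t_def y'_s'_t'_def dist_real_def
      by (simp add: abs_minus_commute)
    moreover have "\<bar>s - s'\<bar> \<le> dist x' x"
      using dist_snd_le[of "fst x'" "fst x"] dist_fst_le[of x' x] unfolding y_s_t_def y'_s'_t'_def dist_real_def
      by (simp add: abs_minus_commute)
    moreover have "\<bar>t - t'\<bar> \<le> dist x' x"
      using dist_snd_le[of x' x] unfolding y_s_t_def y'_s'_t'_def dist_real_def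
      by (simp add: abs_minus_commute)
    ultimately have ss: "\<bar>s - s'\<bar> + \<bar>t - t'\<bar> \<le> dist x' x + dist x' x" by (intro add_mono) auto
    have "c \<le> 4 * dist x' x" unfolding c_def using ss by simp
    then have "c * MW \<le> 4 * dist x' x * MW" using MW(2) by (intro mult_right_mono) auto
    then show ?thesis using \<open>\<bar>y - y'\<bar> \<le> dist x' x\<close> by (simp add: algebra_simps)
  qed
  finally show ?thesis unfolding diff .
qed

end


theorem lemmaA4:
  fixes T :: real
    and W :: "(real \<times> real \<Rightarrow> real) set"
    and lam :: "(real \<times> real \<Rightarrow> real) measure"
    and \<sigma> :: "(real \<times> real \<Rightarrow> real) \<Rightarrow> real \<Rightarrow> real"
  assumes T_pos: "T > 0"
    and W_adm: "admissible_W T W"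
    and lam_prob: "prob_space lam"
    and lam_space: "space lam = W"
    and lam_sets: "sets lam = sup_borel_sets T W"
    and M_W_finite: "(\<integral>\<^sup>+ w. ennreal (supnorm T w) \<partial>lam) < \<infinity>"
    and C'_W_finite: "\<exists>C. \<forall>w\<in>W. \<forall>p\<in>rect T. \<forall>q\<in>rect T. \<bar>w p - w q\<bar> \<le> C"
    and \<sigma>_nonneg: "\<forall>w\<in>W. \<forall>y\<in>{0..1}. 0 \<le> \<sigma> w y"
    and \<sigma>_meas: "(\<lambda>(w, y). \<sigma> w y) \<in> borel_measurable (lam \<Otimes>\<^sub>M restrict_space lborel {0..1})"
    and \<sigma>_int_w: "\<forall>y\<in>{0..1}. (\<integral>\<^sup>+ w. ennreal (\<sigma> w y) \<partial>lam) = 1"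
    and \<sigma>_int_z: "\<forall>w\<in>W. (\<integral>\<^sup>+ z \<in> {0..1}. ennreal (\<sigma> w z) \<partial>lborel) = 1"
  shows "\<forall>x\<in>Delta T. \<forall>e>0. \<exists>d>0. \<forall>\<theta>\<in>Theta T. \<forall>x'\<in>Delta T.
           dist x' x < d \<longrightarrow> \<bar>G lam \<sigma> \<theta> (fst x') (snd x') - G lam \<sigma> \<theta> (fst x) (snd x)\<bar> < e"
proof (intro ballI allI impI)
  fix x :: "(real \<times> real) \<times> real" and e :: real
  assume x: "x \<in> Delta T" and e: "0 < e"
  define M where "M = enn2real (\<integral>\<^sup>+ w. ennreal (supnorm T w) \<partial>lam)"
  have M0: "0 \<le> M" unfolding M_def by simp
  define C where "C = 1 + 4 * M"
  have C: "0 < C" using M0 by (simp add: C_def)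
  show "\<exists>d>0. \<forall>\<theta>\<in>Theta T. \<forall>x'\<in>Delta T.
           dist x' x < d \<longrightarrow> \<bar>G lam \<sigma> \<theta> (fst x') (snd x') - G lam \<sigma> \<theta> (fst x) (snd x)\<bar> < e"
  proof (intro exI[of _ "e / C"] conjI ballI impI)
    show "0 < e / C" using e C by simp
    fix \<theta> x' assume th: "\<theta> \<in> Theta T" and x': "x' \<in> Delta T" and dx: "dist x' x < e / C"
    interpret SG T W \<theta> lam \<sigma>
      by (intro SG.intro SM.intro S.intro SM_axioms.intro SG_axioms.intro) (rule T_pos W_adm th lam_sets lam_space lam_prob M_W_finite \<sigma>_nonneg \<sigma>_meas \<sigma>_int_w \<sigma>_int_z)+
    have MW: "MW = M" unfolding MW_def M_def ..
    have "\<bar>G lam \<sigma> \<theta> (fst x') (snd x') - G lam \<sigma> \<theta> (fst x) (snd x)\<bar> \<le> C * dist x' x"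
      using G_lip[OF x x'] unfolding MW C_def .
    also have "\<dots> < C * (e / C)" using dx C by (intro mult_strict_left_mono) auto
    also have "\<dots> = e" using C by simp
    finally show "\<bar>G lam \<sigma> \<theta> (fst x') (snd x') - G lam \<sigma> \<theta> (fst x) (snd x)\<bar> < e" .
  qed
qed


end
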